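(* Consider the instrumental-variables model described in the context, with $\pi_1\neq 0$, under Assumption B. Let $(\lambda_n)$ satisfy $\lambda_n=o(\sqrt n)$. Then the ridge IV estimator \[ \hat\beta_{\text{ridge}} = \frac{\sum_{i=1}^n (Y_i-\bar Y)(Z_i-\bar Z)}{\sum_{i=1}^n (D_i-\bar D)(Z_i-\bar Z) + \lambda_n} \] is asymptotically normal with \[ \sqrt n\left(\hat\beta_{\text{ridge}}-\beta_1\right) \xrightarrow{d} \mathcal N\!\left(0,\ \frac{\sigma_\epsilon^2}{\pi_1^2}\right). \]
   Context: Data model: for each sample size $n$, observations $(Y_i,D_i,Z_i)$, $i=1,\dots,n$, satisfy $Y_i=\beta_0+\beta_1 D_i+\epsilon_i$ and $D_i=\pi_0+\pi_1 Z_i+\eta_i$, where the error pairs $(\epsilon_i,\eta_i)$ are i.i.d. across $i$ with mean zero, $\mathrm{Var}(\epsilon_i)=\sigma_\epsilon^2<\infty$, $\mathrm{Var}(\eta_i)=\sigma_\eta^2<\infty$ and $\mathrm{Cov}(\epsilon_i,\eta_i)=\sigma_{\epsilon\eta}$ (the errors may be correlated). Bars denote sample means. The penalty $\lambda_n$ is a deterministic sequence of nonnegative reals. Assumption B (stochastic instruments): the $Z_i$ are i.i.d. random variables, independent of the errors, with $\mathrm{Var}(Z_i)=1$ and finite fourth moment $m_4=E[Z_i^4]$. *)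

theory Defs
  imports "HOL-Probability.Probability"
begin

definition normal_measure :: "real \<Rightarrow> real \<Rightarrow> real measure" where
  "normal_measure mu v =
     (if v = 0 then return borel mu else density lborel (normal_density mu (sqrt v)))"

definition smean :: "nat \<Rightarrow> (nat \<Rightarrow> real) \<Rightarrow> real" where
  "smean n X = (\<Sum>i<n. X i) / real n"

definition ridge_iv :: "nat \<Rightarrow> real \<Rightarrow> (nat \<Rightarrow> real) \<Rightarrow> (nat \<Rightarrow> real) \<Rightarrow> (nat \<Rightarrow> real) \<Rightarrow> real" where
  "ridge_iv n lam Y D Z =
     (\<Sum>i<n. (Y i - smean n Y) * (Z i - smean n Z)) /
     ((\<Sum>i<n. (D i - smean n D) * (Z i - smean n Z)) + lam)"

end

theory Submission
  imports Defs
begin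

definition cp0 :: "'a measure \<Rightarrow> (nat \<Rightarrow> 'a \<Rightarrow> real) \<Rightarrow> bool" where
  "cp0 M X \<longleftrightarrow> (\<forall>n. X n \<in> borel_measurable M) \<and>
     (\<forall>d>0. (\<lambda>n. measure M {\<omega>\<in>space M. d < \<bar>X n \<omega>\<bar>}) \<longlonglongrightarrow> 0)"

context prob_space
begin

lemma cp0_meas: "cp0 M X \<Longrightarrow> X n \<in> borel_measurable M"
  unfolding cp0_def by blast

lemma cp0_lim: "cp0 M X \<Longrightarrow> d > 0 \<Longrightarrow> (\<lambda>n. prob {\<omega>\<in>space M. d < \<bar>X n \<omega>\<bar>}) \<longlonglongrightarrow> 0"
  unfolding cp0_def by blast

lemma cp0_bound2:
  assumes X1: "cp0 M X1" and X2: "cp0 M X2" and meas: "\<And>n. Y n \<in> borel_measurable M"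
    and bnd: "\<And>d. d > 0 \<Longrightarrow> \<exists>c>0. \<forall>\<^sub>F n in sequentially. \<forall>\<omega>\<in>space M.
                 d < \<bar>Y n \<omega>\<bar> \<longrightarrow> c < \<bar>X1 n \<omega>\<bar> \<or> c < \<bar>X2 n \<omega>\<bar>"
  shows "cp0 M Y"
  unfolding cp0_def
proof (intro conjI allI impI meas)
  fix d :: real assume d: "d > 0"
  obtain c where c: "c > 0" "\<forall>\<^sub>F n in sequentially. \<forall>\<omega>\<in>space M.
                 d < \<bar>Y n \<omega>\<bar> \<longrightarrow> c < \<bar>X1 n \<omega>\<bar> \<or> c < \<bar>X2 n \<omega>\<bar>"
    using bnd[OF d] by blast
  have lim: "(\<lambda>n. prob {\<omega>\<in>space M. c < \<bar>X1 n \<omega>\<bar>} + prob {\<omega>\<in>space M. c < \<bar>X2 n \<omega>\<bar>}) \<longlonglongrightarrow> 0"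
    using tendsto_add[OF cp0_lim[OF X1 c(1)] cp0_lim[OF X2 c(1)]] by simp
  show "(\<lambda>n. prob {\<omega>\<in>space M. d < \<bar>Y n \<omega>\<bar>}) \<longlonglongrightarrow> 0"
  proof (rule tendsto_sandwich[OF _ _ tendsto_const lim])
    show "\<forall>\<^sub>F n in sequentially. 0 \<le> prob {\<omega> \<in> space M. d < \<bar>Y n \<omega>\<bar>}"
      by simp
    show "\<forall>\<^sub>F n in sequentially. prob {\<omega> \<in> space M. d < \<bar>Y n \<omega>\<bar>} \<le>
        prob {\<omega>\<in>space M. c < \<bar>X1 n \<omega>\<bar>} + prob {\<omega>\<in>space M. c < \<bar>X2 n \<omega>\<bar>}"
      using c(2)
    proof eventually_elim
      case (elim n)
      have [measurable]: "X1 n \<in> borel_measurable M" "X2 n \<in> borel_measurable M"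
        using X1 X2 by (auto simp: cp0_def)
      have e1: "{\<omega> \<in> space M. c < \<bar>X1 n \<omega>\<bar>} \<in> events" by measurable
      have e2: "{\<omega> \<in> space M. c < \<bar>X2 n \<omega>\<bar>} \<in> events" by measurable
      have "prob {\<omega> \<in> space M. d < \<bar>Y n \<omega>\<bar>} \<le>
          prob ({\<omega>\<in>space M. c < \<bar>X1 n \<omega>\<bar>} \<union> {\<omega>\<in>space M. c < \<bar>X2 n \<omega>\<bar>})"
        using elim e1 e2 by (intro finite_measure_mono) auto
      also have "\<dots> \<le> prob {\<omega>\<in>space M. c < \<bar>X1 n \<omega>\<bar>} + prob {\<omega>\<in>space M. c < \<bar>X2 n \<omega>\<bar>}"
        using e1 e2 by (intro measure_subadditive) (auto simp: emeasure_eq_measure)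
      finally show ?case .
    qed
  qed
qed

lemma cp0_bound:
  assumes X: "cp0 M X" and meas: "\<And>n. Y n \<in> borel_measurable M"
    and bnd: "\<And>d. d > 0 \<Longrightarrow> \<exists>c>0. \<forall>\<^sub>F n in sequentially. \<forall>\<omega>\<in>space M. d < \<bar>Y n \<omega>\<bar> \<longrightarrow> c < \<bar>X n \<omega>\<bar>"
  shows "cp0 M Y"
proof (rule cp0_bound2[OF X X meas])
  fix d :: real assume "d > 0"
  from bnd[OF this] show "\<exists>c>0. \<forall>\<^sub>F n in sequentially. \<forall>\<omega>\<in>space M.
                 d < \<bar>Y n \<omega>\<bar> \<longrightarrow> c < \<bar>X n \<omega>\<bar> \<or> c < \<bar>X n \<omega>\<bar>" by simp
qed

lemma cp0_add:
  assumes X: "cp0 M X" and Y: "cp0 M Y"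
  shows "cp0 M (\<lambda>n \<omega>. X n \<omega> + Y n \<omega>)"
proof (rule cp0_bound2[OF X Y])
  show "(\<lambda>\<omega>. X n \<omega> + Y n \<omega>) \<in> borel_measurable M" for n
    using cp0_meas[OF X, of n] cp0_meas[OF Y, of n] by (intro borel_measurable_add borel_measurable_times)
  fix d :: real assume "d > 0"
  then show "\<exists>c>0. \<forall>\<^sub>F n in sequentially. \<forall>\<omega>\<in>space M.
       d < \<bar>X n \<omega> + Y n \<omega>\<bar> \<longrightarrow> c < \<bar>X n \<omega>\<bar> \<or> c < \<bar>Y n \<omega>\<bar>"
  proof (intro exI[of _ "d/2"] conjI always_eventually ballI allI impI)
    fix n \<omega> assume "d < \<bar>X n \<omega> + Y n \<omega>\<bar>"
    then show "d/2 < \<bar>X n \<omega>\<bar> \<or> d/2 < \<bar>Y n \<omega>\<bar>"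
      using abs_triangle_ineq[of "X n \<omega>" "Y n \<omega>"] by linarith
  qed (use \<open>d > 0\<close> in simp)
qed

lemma cp0_scale:
  assumes X: "cp0 M X"
  shows "cp0 M (\<lambda>n \<omega>. c * X n \<omega>)"
proof (rule cp0_bound[OF X])
  show "(\<lambda>\<omega>. c * X n \<omega>) \<in> borel_measurable M" for n
    using cp0_meas[OF X, of n] by (intro borel_measurable_times borel_measurable_const)
  fix d :: real assume d: "d > 0"
  show "\<exists>e>0. \<forall>\<^sub>F n in sequentially. \<forall>\<omega>\<in>space M. d < \<bar>c * X n \<omega>\<bar> \<longrightarrow> e < \<bar>X n \<omega>\<bar>"
  proof (intro exI[of _ "d / (\<bar>c\<bar> + 1)"] conjI always_eventually ballI allI impI)
    show "0 < d / (\<bar>c\<bar> + 1)" using d by simp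
    fix n \<omega> assume "d < \<bar>c * X n \<omega>\<bar>"
    moreover have "\<bar>c * X n \<omega>\<bar> \<le> (\<bar>c\<bar> + 1) * \<bar>X n \<omega>\<bar>"
      unfolding abs_mult by (intro mult_right_mono) auto
    ultimately have "d < (\<bar>c\<bar> + 1) * \<bar>X n \<omega>\<bar>" by linarith
    then show "d / (\<bar>c\<bar> + 1) < \<bar>X n \<omega>\<bar>"
      by (subst pos_divide_less_eq) (auto simp: mult.commute)
  qed
qed

lemma cp0_diff:
  assumes X: "cp0 M X" and Y: "cp0 M Y"
  shows "cp0 M (\<lambda>n \<omega>. X n \<omega> - Y n \<omega>)"
  using cp0_add[OF X cp0_scale[OF Y, of "-1"]] by simp

lemma cp0_mult:
  assumes X: "cp0 M X" and Y: "cp0 M Y"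
  shows "cp0 M (\<lambda>n \<omega>. X n \<omega> * Y n \<omega>)"
proof (rule cp0_bound2[OF X Y])
  show "(\<lambda>\<omega>. X n \<omega> * Y n \<omega>) \<in> borel_measurable M" for n
    using cp0_meas[OF X, of n] cp0_meas[OF Y, of n] by (intro borel_measurable_times)
  fix d :: real assume d: "d > 0"
  show "\<exists>c>0. \<forall>\<^sub>F n in sequentially. \<forall>\<omega>\<in>space M.
       d < \<bar>X n \<omega> * Y n \<omega>\<bar> \<longrightarrow> c < \<bar>X n \<omega>\<bar> \<or> c < \<bar>Y n \<omega>\<bar>"
  proof (intro exI[of _ "min 1 d"] conjI always_eventually ballI allI impI)
    show "0 < min 1 d" using d by simp
    fix n \<omega> assume a: "d < \<bar>X n \<omega> * Y n \<omega>\<bar>"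
    show "min 1 d < \<bar>X n \<omega>\<bar> \<or> min 1 d < \<bar>Y n \<omega>\<bar>"
    proof (rule ccontr)
      assume "\<not> ?thesis"
      then have "\<bar>X n \<omega>\<bar> \<le> 1" "\<bar>Y n \<omega>\<bar> \<le> d" by auto
      then have "\<bar>X n \<omega>\<bar> * \<bar>Y n \<omega>\<bar> \<le> 1 * d"
        using mult_mono[of "\<bar>X n \<omega>\<bar>" 1 "\<bar>Y n \<omega>\<bar>" d] by simp
      then show False using a by (simp add: abs_mult)
    qed
  qed
qed

lemma cp0_det:
  assumes "a \<longlonglongrightarrow> 0"
  shows "cp0 M (\<lambda>n \<omega>. a n)"
  unfolding cp0_def
proof (intro conjI allI impI)
  fix d :: real assume d: "d > 0"
  have "(\<lambda>n. \<bar>a n\<bar>) \<longlonglongrightarrow> 0" using assms tendsto_rabs_zero_iff by blast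
  from order_tendstoD(2)[OF this d] have "\<forall>\<^sub>F n in sequentially. \<bar>a n\<bar> < d" .
  then have "\<forall>\<^sub>F n in sequentially. prob {\<omega>\<in>space M. d < \<bar>a n\<bar>} = 0"
    by eventually_elim auto
  then show "(\<lambda>n. prob {\<omega>\<in>space M. d < \<bar>a n\<bar>}) \<longlonglongrightarrow> 0"
    by (rule tendsto_eventually)
qed simp

lemma cp0_inv:
  assumes V: "cp0 M (\<lambda>n \<omega>. V n \<omega> - c)" and c: "c \<noteq> 0"
  shows "cp0 M (\<lambda>n \<omega>. 1 / V n \<omega> - 1 / c)"
proof (rule cp0_bound[OF V])
  have "(\<lambda>\<omega>. V n \<omega> - c) \<in> borel_measurable M" for n using cp0_meas[OF V] .
  then have "(\<lambda>\<omega>. V n \<omega> - c + c) \<in> borel_measurable M" for n by measurable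
  then have [measurable]: "V n \<in> borel_measurable M" for n by simp
  show "(\<lambda>\<omega>. 1 / V n \<omega> - 1 / c) \<in> borel_measurable M" for n by measurable
  fix d :: real assume d: "d > 0"
  define e where "e = min (\<bar>c\<bar>/2) (d * c\<^sup>2 / 2)"
  have e: "e > 0" using d c by (simp add: e_def)
  show "\<exists>e>0. \<forall>\<^sub>F n in sequentially. \<forall>\<omega>\<in>space M.
       d < \<bar>1 / V n \<omega> - 1 / c\<bar> \<longrightarrow> e < \<bar>V n \<omega> - c\<bar>"
  proof (intro exI[of _ e] conjI e always_eventually ballI allI impI)
    fix n \<omega> assume a: "d < \<bar>1 / V n \<omega> - 1 / c\<bar>"
    show "e < \<bar>V n \<omega> - c\<bar>"
    proof (rule ccontr)
      assume "\<not> ?thesis"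
      then have h0: "\<bar>V n \<omega> - c\<bar> \<le> e" by simp
      have "e \<le> \<bar>c\<bar>/2" "e \<le> d * c\<^sup>2 / 2" unfolding e_def by auto
      then have h1: "\<bar>V n \<omega> - c\<bar> \<le> \<bar>c\<bar>/2" and h2: "\<bar>V n \<omega> - c\<bar> \<le> d * c\<^sup>2 / 2"
        using h0 by linarith+
      have Vb: "\<bar>V n \<omega>\<bar> \<ge> \<bar>c\<bar>/2" using h1 by linarith
      then have V0: "V n \<omega> \<noteq> 0" using c by auto
      have "1 / V n \<omega> - 1 / c = (c - V n \<omega>) / (V n \<omega> * c)"
        using V0 c by (simp add: field_simps)
      then have "\<bar>1 / V n \<omega> - 1 / c\<bar> = \<bar>V n \<omega> - c\<bar> / (\<bar>V n \<omega>\<bar> * \<bar>c\<bar>)"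
        by (simp add: abs_divide abs_mult abs_minus_commute)
      also have "\<dots> \<le> (d * c\<^sup>2 / 2) / ((\<bar>c\<bar>/2) * \<bar>c\<bar>)"
      proof (rule frac_le)
        show "(\<bar>c\<bar>/2) * \<bar>c\<bar> \<le> \<bar>V n \<omega>\<bar> * \<bar>c\<bar>"
          by (rule mult_right_mono) (use Vb in auto)
        show "0 < (\<bar>c\<bar>/2) * \<bar>c\<bar>" using c by (intro mult_pos_pos) auto
        show "0 \<le> d * c\<^sup>2 / 2" using d by simp
      qed (use h2 in auto)
      also have "(\<bar>c\<bar>/2) * \<bar>c\<bar> = c\<^sup>2 / 2" by (simp add: power2_eq_square)
      also have "(d * c\<^sup>2 / 2) / (c\<^sup>2 / 2) = d" using c by simp
      finally show False using a by simp
    qed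
  qed
qed

end

lemma cts_step_props:
  assumes "x < y"
  shows "isCont (cts_step x y) z" and "cts_step x y \<in> borel_measurable borel"
    and "0 \<le> cts_step x y z" and "cts_step x y z \<le> 1"
proof -
  have uc: "uniformly_continuous_on UNIV (cts_step x y)"
    using assms by (rule cts_step_uniformly_continuous)
  then have c: "continuous_on UNIV (cts_step x y)"
    by (rule uniformly_continuous_imp_continuous)
  then show "isCont (cts_step x y) z"
    by (simp add: continuous_on_eq_continuous_at)
  from c show "cts_step x y \<in> borel_measurable borel"
    by (rule borel_measurable_continuous_onI)
  show "0 \<le> cts_step x y z" "cts_step x y z \<le> 1"
    using assms by (auto simp: cts_step_def divide_simps)
qed

context prob_space
begin

lemma slutsky:
  assumes S[measurable]: "\<And>n. S n \<in> borel_measurable M"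
    and T[measurable]: "\<And>n. T n \<in> borel_measurable M"
    and conv: "weak_conv_m (\<lambda>n. distr M borel (S n)) \<nu>"
    and nu: "real_distribution \<nu>"
    and d: "cp0 M (\<lambda>n \<omega>. T n \<omega> - S n \<omega>)"
  shows "weak_conv_m (\<lambda>n. distr M borel (T n)) \<nu>"
proof (rule integral_cts_step_conv_imp_weak_conv)
  show "real_distribution (distr M borel (T n))" for n by simp
  show "real_distribution \<nu>" by fact
  fix x y :: real assume xy: "x < y"
  define g where "g = cts_step x y"
  note gp = cts_step_props[OF xy, folded g_def]
  have gm[measurable]: "g \<in> borel_measurable borel" using gp(2) .
  have gb: "\<bar>g z\<bar> \<le> 1" for z using gp(3)[of z] gp(4)[of z] by simp
  have int: "integrable M (\<lambda>\<omega>. g (R \<omega>))" if [measurable]: "R \<in> borel_measurable M" for R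
    by (rule integrable_const_bound[where B=1]) (auto simp: gb)
  have lim1: "(\<lambda>n. integral\<^sup>L (distr M borel (S n)) g) \<longlonglongrightarrow> integral\<^sup>L \<nu> g"
    by (rule weak_conv_imp_integral_bdd_continuous_conv[where B=1])
       (auto simp: nu conv gp(1) gb)
  then have lim1': "(\<lambda>n. \<integral>\<omega>. g (S n \<omega>) \<partial>M) \<longlonglongrightarrow> integral\<^sup>L \<nu> g"
    by (simp add: integral_distr)
  have lim2: "(\<lambda>n. (\<integral>\<omega>. g (T n \<omega>) \<partial>M) - (\<integral>\<omega>. g (S n \<omega>) \<partial>M)) \<longlonglongrightarrow> 0"
  proof (rule LIMSEQ_I)
    fix r :: real assume r: "0 < r"
    have "uniformly_continuous_on UNIV g"
      unfolding g_def using xy by (rule cts_step_uniformly_continuous)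
    then obtain \<delta> where \<delta>: "\<delta> > 0" "\<And>a b. dist b a < \<delta> \<Longrightarrow> dist (g b) (g a) < r/2"
      unfolding uniformly_continuous_on_def using r by (metis UNIV_I half_gt_zero)
    have "(\<lambda>n. prob {\<omega>\<in>space M. \<delta>/2 < \<bar>T n \<omega> - S n \<omega>\<bar>}) \<longlonglongrightarrow> 0"
      using cp0_lim[OF d, of "\<delta>/2"] \<delta>(1) by (simp only: half_gt_zero_iff)
    from LIMSEQ_D[OF this, of "r/2"] r obtain N where
      N: "\<And>n. n \<ge> N \<Longrightarrow> norm (prob {\<omega>\<in>space M. \<delta>/2 < \<bar>T n \<omega> - S n \<omega>\<bar>} - 0) < r/2"
      by auto
    show "\<exists>no. \<forall>n\<ge>no. norm ((\<integral>\<omega>. g (T n \<omega>) \<partial>M) - (\<integral>\<omega>. g (S n \<omega>) \<partial>M) - 0) < r"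
    proof (intro exI allI impI)
      fix n assume n: "N \<le> n"
      define A where "A = {\<omega>\<in>space M. \<delta>/2 < \<bar>T n \<omega> - S n \<omega>\<bar>}"
      have A[measurable]: "A \<in> sets M" unfolding A_def by measurable
      have pt: "\<bar>g (T n \<omega>) - g (S n \<omega>)\<bar> \<le> r/2 + indicator A \<omega>" if \<omega>: "\<omega> \<in> space M" for \<omega>
      proof (cases "\<omega> \<in> A")
        case True
        then show ?thesis using gp(3,4)[of "T n \<omega>"] gp(3,4)[of "S n \<omega>"] r by auto
      next
        case False
        then have "\<bar>T n \<omega> - S n \<omega>\<bar> < \<delta>" using \<omega> \<delta>(1) by (auto simp: A_def)
        then have "dist (g (T n \<omega>)) (g (S n \<omega>)) < r/2" using \<delta>(2) by (simp add: dist_real_def)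
        then show ?thesis using False by (simp add: dist_real_def)
      qed
      have "\<bar>(\<integral>\<omega>. g (T n \<omega>) \<partial>M) - (\<integral>\<omega>. g (S n \<omega>) \<partial>M)\<bar> = \<bar>\<integral>\<omega>. g (T n \<omega>) - g (S n \<omega>) \<partial>M\<bar>"
        by (simp add: int)
      also have "\<dots> \<le> (\<integral>\<omega>. \<bar>g (T n \<omega>) - g (S n \<omega>)\<bar> \<partial>M)"
        by (rule integral_abs_bound)
      also have "\<dots> \<le> (\<integral>\<omega>. r/2 + indicator A \<omega> \<partial>M)"
      proof (rule integral_mono)
        show "integrable M (\<lambda>\<omega>. r/2 + indicator A \<omega>)"
          by (rule integrable_const_bound[where B="\<bar>r/2\<bar> + 1"]) (auto split: split_indicator)
      qed (auto simp: int pt)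
      also have "\<dots> = r/2 + prob A"
      proof -
        have iA: "integrable M (indicator A :: 'a \<Rightarrow> real)"
          using A by (intro integrable_real_indicator) (auto simp: emeasure_eq_measure)
        have "(\<integral>\<omega>. r/2 + indicator A \<omega> \<partial>M) = (\<integral>\<omega>. r/2 \<partial>M) + (\<integral>\<omega>. indicator A \<omega> \<partial>M)"
          by (rule Bochner_Integration.integral_add) (auto simp: iA)
        then show ?thesis using A by (simp add: prob_space)
      qed
      also have "\<dots> < r/2 + r/2"
        using N[OF n] unfolding A_def by simp
      finally show "norm ((\<integral>\<omega>. g (T n \<omega>) \<partial>M) - (\<integral>\<omega>. g (S n \<omega>) \<partial>M) - 0) < r" by simp
    qed
  qed
  have "(\<lambda>n. (\<integral>\<omega>. g (S n \<omega>) \<partial>M) + ((\<integral>\<omega>. g (T n \<omega>) \<partial>M) - (\<integral>\<omega>. g (S n \<omega>) \<partial>M)))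
          \<longlonglongrightarrow> integral\<^sup>L \<nu> g + 0"
    by (rule tendsto_add[OF lim1' lim2])
  then show "(\<lambda>n. integral\<^sup>L (distr M borel (T n)) (cts_step x y)) \<longlonglongrightarrow> integral\<^sup>L \<nu> (cts_step x y)"
    by (simp add: integral_distr g_def[symmetric])
qed

end

context prob_space
begin

lemma markov_sq:
  assumes [measurable]: "Y \<in> borel_measurable M" and I: "integrable M (\<lambda>\<omega>. (Y \<omega>)\<^sup>2)" and d: "d > 0"
  shows "prob {\<omega>\<in>space M. d < \<bar>Y \<omega>\<bar>} \<le> expectation (\<lambda>\<omega>. (Y \<omega>)\<^sup>2) / d\<^sup>2"
proof -
  have "prob {\<omega>\<in>space M. d < \<bar>Y \<omega>\<bar>} \<le> prob {\<omega>\<in>space M. d\<^sup>2 \<le> (Y \<omega>)\<^sup>2}"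
  proof (rule finite_measure_mono)
    show "{\<omega>\<in>space M. d < \<bar>Y \<omega>\<bar>} \<subseteq> {\<omega>\<in>space M. d\<^sup>2 \<le> (Y \<omega>)\<^sup>2}"
    proof safe
      fix \<omega> assume "d < \<bar>Y \<omega>\<bar>"
      then have "d\<^sup>2 \<le> \<bar>Y \<omega>\<bar>\<^sup>2" using d by (intro power_mono) auto
      then show "d\<^sup>2 \<le> (Y \<omega>)\<^sup>2" by simp
    qed
    show "{\<omega>\<in>space M. d\<^sup>2 \<le> (Y \<omega>)\<^sup>2} \<in> events" by measurable
  qed
  also have "\<dots> \<le> expectation (\<lambda>\<omega>. (Y \<omega>)\<^sup>2) / d\<^sup>2"
    by (rule integral_Markov_inequality_measure[OF I, where A="space M"]) (use d in auto)
  finally show ?thesis .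
qed

lemma cp0_sq:
  assumes [measurable]: "\<And>n. Y n \<in> borel_measurable M"
    and I: "\<And>n. integrable M (\<lambda>\<omega>. (Y n \<omega>)\<^sup>2)"
    and L: "(\<lambda>n. expectation (\<lambda>\<omega>. (Y n \<omega>)\<^sup>2)) \<longlonglongrightarrow> 0"
  shows "cp0 M Y"
  unfolding cp0_def
proof (intro conjI allI impI)
  fix d :: real assume d: "d > 0"
  have "(\<lambda>n. expectation (\<lambda>\<omega>. (Y n \<omega>)\<^sup>2) / d\<^sup>2) \<longlonglongrightarrow> 0 / d\<^sup>2"
    by (intro tendsto_divide L tendsto_const) (use d in simp)
  then have L2: "(\<lambda>n. expectation (\<lambda>\<omega>. (Y n \<omega>)\<^sup>2) / d\<^sup>2) \<longlonglongrightarrow> 0" by simp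
  show "(\<lambda>n. prob {\<omega>\<in>space M. d < \<bar>Y n \<omega>\<bar>}) \<longlonglongrightarrow> 0"
    by (rule tendsto_sandwich[OF _ _ tendsto_const L2])
       (auto intro!: always_eventually markov_sq I d)
qed simp

lemma cp0_tight_mult:
  assumes X: "cp0 M X" and [measurable]: "\<And>n. Y n \<in> borel_measurable M"
    and I: "\<And>n. integrable M (\<lambda>\<omega>. (Y n \<omega>)\<^sup>2)"
    and C: "\<And>n. expectation (\<lambda>\<omega>. (Y n \<omega>)\<^sup>2) \<le> C"
  shows "cp0 M (\<lambda>n \<omega>. Y n \<omega> * X n \<omega>)"
  unfolding cp0_def
proof (intro conjI allI impI)
  have [measurable]: "X n \<in> borel_measurable M" for n using cp0_meas[OF X] .
  show "(\<lambda>\<omega>. Y n \<omega> * X n \<omega>) \<in> borel_measurable M" for n by measurable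
  fix d :: real assume d: "d > 0"
  show "(\<lambda>n. prob {\<omega>\<in>space M. d < \<bar>Y n \<omega> * X n \<omega>\<bar>}) \<longlonglongrightarrow> 0"
  proof (rule LIMSEQ_I)
    fix r :: real assume r: "r > 0"
    define K where "K = 2 * \<bar>C\<bar> / r + 1"
    have K1: "K \<ge> 1" unfolding K_def using r by simp
    have "K\<^sup>2 \<ge> K" using K1 by (simp add: power2_eq_square)
    moreover have "K > 2 * \<bar>C\<bar> / r" unfolding K_def by simp
    ultimately have "K\<^sup>2 > 2 * \<bar>C\<bar> / r" by linarith
    then have "K\<^sup>2 * r > 2 * \<bar>C\<bar>" using r by (simp add: field_simps)
    then have CK: "C / K\<^sup>2 < r / 2" using K1 r by (simp add: field_simps)
    have Kp: "K > 0" using K1 by simp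
    have "(\<lambda>n. prob {\<omega>\<in>space M. d / K < \<bar>X n \<omega>\<bar>}) \<longlonglongrightarrow> 0"
      using cp0_lim[OF X] d Kp by simp
    from LIMSEQ_D[OF this, of "r/2"] r obtain N where
      N: "\<And>n. n \<ge> N \<Longrightarrow> norm (prob {\<omega>\<in>space M. d / K < \<bar>X n \<omega>\<bar>} - 0) < r/2" by auto
    show "\<exists>no. \<forall>n\<ge>no. norm (prob {\<omega>\<in>space M. d < \<bar>Y n \<omega> * X n \<omega>\<bar>} - 0) < r"
    proof (intro exI allI impI)
      fix n assume n: "N \<le> n"
      have e1: "{\<omega>\<in>space M. K \<le> \<bar>Y n \<omega>\<bar>} \<in> events" by measurable
      have e2: "{\<omega>\<in>space M. d / K < \<bar>X n \<omega>\<bar>} \<in> events" by measurable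
      have "prob {\<omega>\<in>space M. d < \<bar>Y n \<omega> * X n \<omega>\<bar>} \<le>
          prob ({\<omega>\<in>space M. K \<le> \<bar>Y n \<omega>\<bar>} \<union> {\<omega>\<in>space M. d / K < \<bar>X n \<omega>\<bar>})"
      proof (rule finite_measure_mono)
        show "{\<omega>\<in>space M. d < \<bar>Y n \<omega> * X n \<omega>\<bar>} \<subseteq>
          {\<omega>\<in>space M. K \<le> \<bar>Y n \<omega>\<bar>} \<union> {\<omega>\<in>space M. d / K < \<bar>X n \<omega>\<bar>}"
        proof safe
          fix \<omega> assume a: "d < \<bar>Y n \<omega> * X n \<omega>\<bar>" "\<not> d / K < \<bar>X n \<omega>\<bar>"
          show "K \<le> \<bar>Y n \<omega>\<bar>"
          proof (rule ccontr)
            assume "\<not> K \<le> \<bar>Y n \<omega>\<bar>"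
            then have "\<bar>Y n \<omega>\<bar> \<le> K" by simp
            moreover have "\<bar>X n \<omega>\<bar> \<le> d / K" using a(2) by simp
            ultimately have "\<bar>Y n \<omega>\<bar> * \<bar>X n \<omega>\<bar> \<le> K * (d / K)"
              using mult_mono[of "\<bar>Y n \<omega>\<bar>" K "\<bar>X n \<omega>\<bar>" "d / K"] Kp by simp
            then show False using a(1) Kp by (simp add: abs_mult)
          qed
        qed
      qed (use e1 e2 in auto)
      also have "\<dots> \<le> prob {\<omega>\<in>space M. K \<le> \<bar>Y n \<omega>\<bar>} + prob {\<omega>\<in>space M. d / K < \<bar>X n \<omega>\<bar>}"
        using e1 e2 by (intro measure_subadditive) (auto simp: emeasure_eq_measure)
      also have "prob {\<omega>\<in>space M. K \<le> \<bar>Y n \<omega>\<bar>} \<le> prob {\<omega>\<in>space M. K\<^sup>2 \<le> (Y n \<omega>)\<^sup>2}"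
      proof (rule finite_measure_mono)
        show "{\<omega>\<in>space M. K \<le> \<bar>Y n \<omega>\<bar>} \<subseteq> {\<omega>\<in>space M. K\<^sup>2 \<le> (Y n \<omega>)\<^sup>2}"
        proof safe
          fix \<omega> assume "K \<le> \<bar>Y n \<omega>\<bar>"
          then have "K\<^sup>2 \<le> \<bar>Y n \<omega>\<bar>\<^sup>2" using Kp by (intro power_mono) auto
          then show "K\<^sup>2 \<le> (Y n \<omega>)\<^sup>2" by simp
        qed
        show "{\<omega>\<in>space M. K\<^sup>2 \<le> (Y n \<omega>)\<^sup>2} \<in> events" by measurable
      qed
      also have "prob {\<omega>\<in>space M. K\<^sup>2 \<le> (Y n \<omega>)\<^sup>2} \<le> expectation (\<lambda>\<omega>. (Y n \<omega>)\<^sup>2) / K\<^sup>2"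
        by (rule integral_Markov_inequality_measure[OF I, where A="space M"]) (use Kp in auto)
      also have "\<dots> \<le> C / K\<^sup>2"
        using C[of n] Kp by (simp add: divide_right_mono)
      finally have fin: "prob {\<omega>\<in>space M. d < \<bar>Y n \<omega> * X n \<omega>\<bar>} \<le> C / K\<^sup>2 + prob {\<omega>\<in>space M. d / K < \<bar>X n \<omega>\<bar>}"
        by simp
      have n1: "prob {\<omega>\<in>space M. d / K < \<bar>X n \<omega>\<bar>} < r/2" using N[OF n] by simp
      from fin n1 CK have "prob {\<omega>\<in>space M. d < \<bar>Y n \<omega> * X n \<omega>\<bar>} < r" by linarith
      then show "norm (prob {\<omega>\<in>space M. d < \<bar>Y n \<omega> * X n \<omega>\<bar>} - 0) < r" by simp
    qed
  qed
qed

lemma sumsq: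
  fixes W :: "nat \<Rightarrow> 'a \<Rightarrow> real"
  assumes indep: "indep_vars (\<lambda>_. borel) W UNIV"
    and sq: "\<And>i. integrable M (\<lambda>\<omega>. (W i \<omega>)\<^sup>2)"
    and mean: "\<And>i. expectation (W i) = 0"
    and var: "\<And>i. expectation (\<lambda>\<omega>. (W i \<omega>)\<^sup>2) = v"
  shows "integrable M (\<lambda>\<omega>. (\<Sum>i<n. W i \<omega>)\<^sup>2)"
    and "expectation (\<lambda>\<omega>. (\<Sum>i<n. W i \<omega>)\<^sup>2) = real n * v"
proof -
  have [measurable]: "W i \<in> borel_measurable M" for i
    using indep unfolding indep_vars_def2 by auto
  have iW: "integrable M (W i)" for i
    by (rule square_integrable_imp_integrable[OF _ sq]) simp
  have iWW: "integrable M (\<lambda>\<omega>. W i \<omega> * W j \<omega>)" for i j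
  proof (rule Bochner_Integration.integrable_bound)
    show "integrable M (\<lambda>\<omega>. (W i \<omega>)\<^sup>2 + (W j \<omega>)\<^sup>2)"
      using sq by (rule Bochner_Integration.integrable_add) (rule sq)
    show "(\<lambda>\<omega>. W i \<omega> * W j \<omega>) \<in> borel_measurable M" by measurable
    show "AE \<omega> in M. norm (W i \<omega> * W j \<omega>) \<le> norm ((W i \<omega>)\<^sup>2 + (W j \<omega>)\<^sup>2)"
    proof (intro AE_I2)
      fix \<omega>
      have "0 \<le> (\<bar>W i \<omega>\<bar> - \<bar>W j \<omega>\<bar>)\<^sup>2" by simp
      then have "2 * (\<bar>W i \<omega>\<bar> * \<bar>W j \<omega>\<bar>) \<le> (W i \<omega>)\<^sup>2 + (W j \<omega>)\<^sup>2"
        by (simp add: power2_eq_square algebra_simps)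
      moreover have "0 \<le> \<bar>W i \<omega>\<bar> * \<bar>W j \<omega>\<bar>" by simp
      ultimately have "\<bar>W i \<omega>\<bar> * \<bar>W j \<omega>\<bar> \<le> (W i \<omega>)\<^sup>2 + (W j \<omega>)\<^sup>2" by linarith
      then show "norm (W i \<omega> * W j \<omega>) \<le> norm ((W i \<omega>)\<^sup>2 + (W j \<omega>)\<^sup>2)"
        by (simp add: abs_mult)
    qed
  qed
  have E: "expectation (\<lambda>\<omega>. W i \<omega> * W j \<omega>) = (if i = j then v else 0)" for i j
  proof (cases "i = j")
    case True then show ?thesis using var[of j] by (simp add: power2_eq_square)
  next
    case False
    have ind2: "indep_vars (\<lambda>_. borel) W {i, j}"
      by (rule indep_vars_subset[OF indep]) auto
    have "expectation (\<lambda>\<omega>. \<Prod>k\<in>{i,j}. W k \<omega>) = (\<Prod>k\<in>{i,j}. expectation (W k))"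
      by (rule indep_vars_lebesgue_integral[OF _ ind2]) (auto simp: iW)
    then show ?thesis using False mean by simp
  qed
  have sq_eq: "(\<lambda>\<omega>. (\<Sum>i<n. W i \<omega>)\<^sup>2) = (\<lambda>\<omega>. \<Sum>i<n. \<Sum>j<n. W i \<omega> * W j \<omega>)"
    by (simp add: power2_eq_square sum_product)
  show "integrable M (\<lambda>\<omega>. (\<Sum>i<n. W i \<omega>)\<^sup>2)"
    unfolding sq_eq by (intro Bochner_Integration.integrable_sum iWW)
  have "expectation (\<lambda>\<omega>. (\<Sum>i<n. W i \<omega>)\<^sup>2) = (\<Sum>i<n. \<Sum>j<n. expectation (\<lambda>\<omega>. W i \<omega> * W j \<omega>))"
    unfolding sq_eq
    by (simp add: Bochner_Integration.integral_sum Bochner_Integration.integrable_sum iWW)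
  also have "\<dots> = (\<Sum>i<n. v)"
    by (simp add: E)
  finally show "expectation (\<lambda>\<omega>. (\<Sum>i<n. W i \<omega>)\<^sup>2) = real n * v" by simp
qed

lemma wlln:
  fixes W :: "nat \<Rightarrow> 'a \<Rightarrow> real"
  assumes indep: "indep_vars (\<lambda>_. borel) W UNIV"
    and sq: "\<And>i. integrable M (\<lambda>\<omega>. (W i \<omega>)\<^sup>2)"
    and mean: "\<And>i. expectation (W i) = 0"
    and var: "\<And>i. expectation (\<lambda>\<omega>. (W i \<omega>)\<^sup>2) = v"
  shows "cp0 M (\<lambda>n \<omega>. (\<Sum>i<n. W i \<omega>) / real n)"
proof (rule cp0_sq)
  have [measurable]: "W i \<in> borel_measurable M" for i
    using indep unfolding indep_vars_def2 by auto
  show "(\<lambda>\<omega>. (\<Sum>i<n. W i \<omega>) / real n) \<in> borel_measurable M" for n by measurable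
  note S = sumsq[OF indep sq mean var]
  show "integrable M (\<lambda>\<omega>. ((\<Sum>i<n. W i \<omega>) / real n)\<^sup>2)" for n
    using S(1)[of n] by (simp add: power_divide)
  have "expectation (\<lambda>\<omega>. ((\<Sum>i<n. W i \<omega>) / real n)\<^sup>2) = v / real n" for n
  proof (cases "n = 0")
    case True then show ?thesis by simp
  next
    case False
    then show ?thesis using S(2)[of n] by (simp add: power_divide power2_eq_square)
  qed
  moreover have "(\<lambda>n. v / real n) \<longlonglongrightarrow> 0"
    by (rule tendsto_divide_0[OF tendsto_const]) (rule filterlim_at_top_imp_at_infinity[OF filterlim_real_sequentially])
  ultimately show "(\<lambda>n. expectation (\<lambda>\<omega>. ((\<Sum>i<n. W i \<omega>) / real n)\<^sup>2)) \<longlonglongrightarrow> 0" by simp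
qed

lemma tight_sum:
  fixes W :: "nat \<Rightarrow> 'a \<Rightarrow> real"
  assumes indep: "indep_vars (\<lambda>_. borel) W UNIV"
    and sq: "\<And>i. integrable M (\<lambda>\<omega>. (W i \<omega>)\<^sup>2)"
    and mean: "\<And>i. expectation (W i) = 0"
    and var: "\<And>i. expectation (\<lambda>\<omega>. (W i \<omega>)\<^sup>2) = v"
  shows "integrable M (\<lambda>\<omega>. ((\<Sum>i<n. W i \<omega>) / sqrt (real n))\<^sup>2)"
    and "expectation (\<lambda>\<omega>. ((\<Sum>i<n. W i \<omega>) / sqrt (real n))\<^sup>2) \<le> v"
proof -
  note S = sumsq[OF indep sq mean var]
  show "integrable M (\<lambda>\<omega>. ((\<Sum>i<n. W i \<omega>) / sqrt (real n))\<^sup>2)"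
    using S(1)[of n] by (simp add: power_divide)
  have v: "v \<ge> 0" using var[of 0] by (metis integral_nonneg_AE AE_I2 zero_le_power2)
  show "expectation (\<lambda>\<omega>. ((\<Sum>i<n. W i \<omega>) / sqrt (real n))\<^sup>2) \<le> v"
  proof (cases "n = 0")
    case True then show ?thesis using v by simp
  next
    case False
    then show ?thesis using S(2)[of n] by (simp add: power_divide)
  qed
qed

end

locale ivm = prob_space M
  for M :: "'a measure" +
  fixes eps eta Z :: "nat \<Rightarrow> 'a \<Rightarrow> real"
    and sig_e2 sig_h2 sig_eh m4 :: real
  assumes meas_eps[measurable]: "\<And>i. eps i \<in> borel_measurable M"
    and meas_eta[measurable]: "\<And>i. eta i \<in> borel_measurable M"
    and meas_Z[measurable]: "\<And>i. Z i \<in> borel_measurable M"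
    and indep: "indep_vars (\<lambda>_. borel) (\<lambda>i \<omega>. (eps i \<omega>, eta i \<omega>, Z i \<omega>)) UNIV"
    and indep_Z_err: "\<And>i (A :: (real \<times> real) set) (B :: real set). A \<in> sets borel \<Longrightarrow> B \<in> sets borel \<Longrightarrow>
         measure M {\<omega> \<in> space M. (eps i \<omega>, eta i \<omega>) \<in> A \<and> Z i \<omega> \<in> B}
         = measure M {\<omega> \<in> space M. (eps i \<omega>, eta i \<omega>) \<in> A} * measure M {\<omega> \<in> space M. Z i \<omega> \<in> B}"
    and ident_err: "\<And>i. distr M borel (\<lambda>\<omega>. (eps i \<omega>, eta i \<omega>)) = distr M borel (\<lambda>\<omega>. (eps 0 \<omega>, eta 0 \<omega>))"
    and ident_Z: "\<And>i. distr M borel (Z i) = distr M borel (Z 0)"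
    and int_e2: "integrable M (\<lambda>\<omega>. (eps 0 \<omega>)\<^sup>2)"
    and int_h2: "integrable M (\<lambda>\<omega>. (eta 0 \<omega>)\<^sup>2)"
    and mean_e: "integral\<^sup>L M (eps 0) = 0"
    and mean_h: "integral\<^sup>L M (eta 0) = 0"
    and var_e: "integral\<^sup>L M (\<lambda>\<omega>. (eps 0 \<omega>)\<^sup>2) = sig_e2"
    and int_Z4: "integrable M (\<lambda>\<omega>. (Z 0 \<omega>) ^ 4)"
    and var_Z: "integral\<^sup>L M (\<lambda>\<omega>. (Z 0 \<omega> - integral\<^sup>L M (Z 0))\<^sup>2) = 1"
begin

definition "T i \<omega> = ((eps i \<omega>, eta i \<omega>), Z i \<omega>)"
definition "mu = integral\<^sup>L M (Z 0)"

lemma T_meas[measurable]: "T i \<in> borel_measurable M"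
  unfolding T_def by measurable

lemma T_meas2: "T i \<in> measurable M (borel \<Otimes>\<^sub>M borel)"
  unfolding T_def by (intro measurable_Pair) measurable

lemma indepT: "indep_vars (\<lambda>_. borel) T UNIV"
proof -
  have m: "(\<lambda>x::real\<times>real\<times>real. ((fst x, fst (snd x)), snd (snd x))) \<in> borel_measurable borel"
    by (intro borel_measurable_continuous_onI continuous_intros)
  have "indep_vars (\<lambda>_. borel) (\<lambda>i \<omega>. (\<lambda>x::real\<times>real\<times>real. ((fst x, fst (snd x)), snd (snd x))) (eps i \<omega>, eta i \<omega>, Z i \<omega>)) UNIV"
    by (rule indep_vars_compose2[OF indep]) (rule m)
  then show ?thesis by (simp add: T_def[abs_def])
qed

lemma distr_T_prod:
  "distr M borel (T i) = distr M borel (\<lambda>\<omega>. (eps i \<omega>, eta i \<omega>)) \<Otimes>\<^sub>M distr M borel (Z i)"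
proof -
  have "distr M borel (T i) = distr M (borel \<Otimes>\<^sub>M borel) (T i)"
    by (simp add: borel_prod)
  also have "\<dots> = distr M borel (\<lambda>\<omega>. (eps i \<omega>, eta i \<omega>)) \<Otimes>\<^sub>M distr M borel (Z i)"
  proof (rule pair_measure_eqI[symmetric])
    show "sigma_finite_measure (distr M borel (\<lambda>\<omega>. (eps i \<omega>, eta i \<omega>)))"
      by (rule prob_space_imp_sigma_finite) (simp add: prob_space_distr)
    show "sigma_finite_measure (distr M borel (Z i))"
      by (rule prob_space_imp_sigma_finite) (simp add: prob_space_distr)
    show "sets (distr M borel (\<lambda>\<omega>. (eps i \<omega>, eta i \<omega>)) \<Otimes>\<^sub>M distr M borel (Z i)) =
        sets (distr M (borel \<Otimes>\<^sub>M borel) (T i))"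
      by simp
    fix A B assume A: "A \<in> sets (distr M borel (\<lambda>\<omega>. (eps i \<omega>, eta i \<omega>)))"
      and B: "B \<in> sets (distr M borel (Z i))"
    then have A': "A \<in> sets borel" and B': "B \<in> sets borel" by auto
    have "emeasure (distr M (borel \<Otimes>\<^sub>M borel) (T i)) (A \<times> B) = emeasure M (T i -` (A \<times> B) \<inter> space M)"
      using A' B' by (intro emeasure_distr T_meas2) auto
    also have "T i -` (A \<times> B) \<inter> space M = {\<omega> \<in> space M. (eps i \<omega>, eta i \<omega>) \<in> A \<and> Z i \<omega> \<in> B}"
      by (auto simp: T_def)
    also have "emeasure M \<dots> = ennreal (measure M {\<omega> \<in> space M. (eps i \<omega>, eta i \<omega>) \<in> A} * measure M {\<omega> \<in> space M. Z i \<omega> \<in> B})"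
      using A' B' by (simp add: emeasure_eq_measure indep_Z_err)
    also have "\<dots> = emeasure (distr M borel (\<lambda>\<omega>. (eps i \<omega>, eta i \<omega>))) A * emeasure (distr M borel (Z i)) B"
    proof -
      have "emeasure (distr M borel (\<lambda>\<omega>. (eps i \<omega>, eta i \<omega>))) A = emeasure M ((\<lambda>\<omega>. (eps i \<omega>, eta i \<omega>)) -` A \<inter> space M)"
        using A' by (intro emeasure_distr) auto
      moreover have "emeasure (distr M borel (Z i)) B = emeasure M (Z i -` B \<inter> space M)"
        using B' by (intro emeasure_distr) auto
      moreover have "(\<lambda>\<omega>. (eps i \<omega>, eta i \<omega>)) -` A \<inter> space M = {\<omega> \<in> space M. (eps i \<omega>, eta i \<omega>) \<in> A}" by auto
      moreover have "Z i -` B \<inter> space M = {\<omega> \<in> space M. Z i \<omega> \<in> B}" by auto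
      ultimately show ?thesis
        by (simp add: emeasure_eq_measure ennreal_mult)
    qed
    finally show "emeasure (distr M borel (\<lambda>\<omega>. (eps i \<omega>, eta i \<omega>))) A * emeasure (distr M borel (Z i)) B =
        emeasure (distr M (borel \<Otimes>\<^sub>M borel) (T i)) (A \<times> B)" by simp
  qed
  finally show ?thesis .
qed

lemma distr_T: "distr M borel (T i) = distr M borel (T 0)"
  unfolding distr_T_prod ident_err[of i] ident_Z[of i] ..

lemma indep0:
  fixes f :: "real \<times> real \<Rightarrow> real" and h :: "real \<Rightarrow> real"
  assumes [measurable]: "f \<in> borel_measurable borel" "h \<in> borel_measurable borel"
  shows "indep_var borel (\<lambda>\<omega>. f (eps 0 \<omega>, eta 0 \<omega>)) borel (\<lambda>\<omega>. h (Z 0 \<omega>))"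
proof (subst indep_var_distribution_eq, intro conjI)
  show "random_variable borel (\<lambda>\<omega>. f (eps 0 \<omega>, eta 0 \<omega>))" by measurable
  show "random_variable borel (\<lambda>\<omega>. h (Z 0 \<omega>))" by measurable
  show "distr M borel (\<lambda>\<omega>. f (eps 0 \<omega>, eta 0 \<omega>)) \<Otimes>\<^sub>M distr M borel (\<lambda>\<omega>. h (Z 0 \<omega>)) =
        distr M (borel \<Otimes>\<^sub>M borel) (\<lambda>\<omega>. (f (eps 0 \<omega>, eta 0 \<omega>), h (Z 0 \<omega>)))"
  proof (rule pair_measure_eqI)
    show "sigma_finite_measure (distr M borel (\<lambda>\<omega>. f (eps 0 \<omega>, eta 0 \<omega>)))"
      by (rule prob_space_imp_sigma_finite) (simp add: prob_space_distr)
    show "sigma_finite_measure (distr M borel (\<lambda>\<omega>. h (Z 0 \<omega>)))"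
      by (rule prob_space_imp_sigma_finite) (simp add: prob_space_distr)
    show "sets (distr M borel (\<lambda>\<omega>. f (eps 0 \<omega>, eta 0 \<omega>)) \<Otimes>\<^sub>M distr M borel (\<lambda>\<omega>. h (Z 0 \<omega>))) =
        sets (distr M (borel \<Otimes>\<^sub>M borel) (\<lambda>\<omega>. (f (eps 0 \<omega>, eta 0 \<omega>), h (Z 0 \<omega>))))"
      by simp
    fix A B assume A: "A \<in> sets (distr M borel (\<lambda>\<omega>. f (eps 0 \<omega>, eta 0 \<omega>)))"
      and B: "B \<in> sets (distr M borel (\<lambda>\<omega>. h (Z 0 \<omega>)))"
    then have A'[measurable]: "A \<in> sets borel" and B'[measurable]: "B \<in> sets borel" by auto
    have fA: "f -` A \<in> sets borel"
      using measurable_sets[OF assms(1) A'] by simp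
    have hB: "h -` B \<in> sets borel"
      using measurable_sets[OF assms(2) B'] by simp
    have "emeasure (distr M (borel \<Otimes>\<^sub>M borel) (\<lambda>\<omega>. (f (eps 0 \<omega>, eta 0 \<omega>), h (Z 0 \<omega>)))) (A \<times> B)
        = emeasure M {\<omega> \<in> space M. (eps 0 \<omega>, eta 0 \<omega>) \<in> f -` A \<and> Z 0 \<omega> \<in> h -` B}"
      using A' B' by (subst emeasure_distr) (auto intro!: arg_cong[where f="emeasure M"])
    also have "\<dots> = ennreal (measure M {\<omega> \<in> space M. (eps 0 \<omega>, eta 0 \<omega>) \<in> f -` A} * measure M {\<omega> \<in> space M. Z 0 \<omega> \<in> h -` B})"
      using indep_Z_err[OF fA hB, of 0] by (simp add: emeasure_eq_measure)
    also have "\<dots> = emeasure (distr M borel (\<lambda>\<omega>. f (eps 0 \<omega>, eta 0 \<omega>))) A * emeasure (distr M borel (\<lambda>\<omega>. h (Z 0 \<omega>))) B"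
    proof -
      have "emeasure (distr M borel (\<lambda>\<omega>. f (eps 0 \<omega>, eta 0 \<omega>))) A = emeasure M {\<omega> \<in> space M. (eps 0 \<omega>, eta 0 \<omega>) \<in> f -` A}"
        using A' by (subst emeasure_distr) (auto intro!: arg_cong[where f="emeasure M"])
      moreover have "emeasure (distr M borel (\<lambda>\<omega>. h (Z 0 \<omega>))) B = emeasure M {\<omega> \<in> space M. Z 0 \<omega> \<in> h -` B}"
        using B' by (subst emeasure_distr) (auto intro!: arg_cong[where f="emeasure M"])
      ultimately show ?thesis
        by (simp add: emeasure_eq_measure ennreal_mult)
    qed
    finally show "emeasure (distr M borel (\<lambda>\<omega>. f (eps 0 \<omega>, eta 0 \<omega>))) A * emeasure (distr M borel (\<lambda>\<omega>. h (Z 0 \<omega>))) B =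
        emeasure (distr M (borel \<Otimes>\<^sub>M borel) (\<lambda>\<omega>. (f (eps 0 \<omega>, eta 0 \<omega>), h (Z 0 \<omega>)))) (A \<times> B)" by simp
  qed
qed

lemma indep_prod:
  fixes f :: "real \<times> real \<Rightarrow> real" and h :: "real \<Rightarrow> real"
  assumes [measurable]: "f \<in> borel_measurable borel" "h \<in> borel_measurable borel"
    and If: "integrable M (\<lambda>\<omega>. f (eps 0 \<omega>, eta 0 \<omega>))" and Ih: "integrable M (\<lambda>\<omega>. h (Z 0 \<omega>))"
  shows "integrable M (\<lambda>\<omega>. f (eps 0 \<omega>, eta 0 \<omega>) * h (Z 0 \<omega>))"
    and "expectation (\<lambda>\<omega>. f (eps 0 \<omega>, eta 0 \<omega>) * h (Z 0 \<omega>)) =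
         expectation (\<lambda>\<omega>. f (eps 0 \<omega>, eta 0 \<omega>)) * expectation (\<lambda>\<omega>. h (Z 0 \<omega>))"
  using indep_var_integrable[OF indep0[OF assms(1,2)] If Ih]
        indep_var_lebesgue_integral[OF indep0[OF assms(1,2)] If Ih] by auto

lemma T_integral:
  fixes g :: "(real \<times> real) \<times> real \<Rightarrow> real"
  assumes [measurable]: "g \<in> borel_measurable borel"
  shows "(\<integral>\<omega>. g (T i \<omega>) \<partial>M) = (\<integral>\<omega>. g (T 0 \<omega>) \<partial>M)"
    and "integrable M (\<lambda>\<omega>. g (T i \<omega>)) \<longleftrightarrow> integrable M (\<lambda>\<omega>. g (T 0 \<omega>))"
proof -
  have "(\<integral>\<omega>. g (T i \<omega>) \<partial>M) = integral\<^sup>L (distr M borel (T i)) g"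
    by (simp add: integral_distr)
  also have "\<dots> = (\<integral>\<omega>. g (T 0 \<omega>) \<partial>M)"
    by (simp add: distr_T[of i] integral_distr)
  finally show "(\<integral>\<omega>. g (T i \<omega>) \<partial>M) = (\<integral>\<omega>. g (T 0 \<omega>) \<partial>M)" .
  have "integrable M (\<lambda>\<omega>. g (T i \<omega>)) \<longleftrightarrow> integrable (distr M borel (T i)) g"
    by (simp add: integrable_distr_eq)
  also have "\<dots> \<longleftrightarrow> integrable M (\<lambda>\<omega>. g (T 0 \<omega>))"
    by (simp add: distr_T[of i] integrable_distr_eq)
  finally show "integrable M (\<lambda>\<omega>. g (T i \<omega>)) \<longleftrightarrow> integrable M (\<lambda>\<omega>. g (T 0 \<omega>))" .
qed

lemma iid_family:
  fixes g :: "(real \<times> real) \<times> real \<Rightarrow> real"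
  assumes [measurable]: "g \<in> borel_measurable borel"
    and sq: "integrable M (\<lambda>\<omega>. (g (T 0 \<omega>))\<^sup>2)"
    and mn: "expectation (\<lambda>\<omega>. g (T 0 \<omega>)) = 0"
  shows "indep_vars (\<lambda>_. borel) (\<lambda>i \<omega>. g (T i \<omega>)) UNIV"
    and "\<And>i. integrable M (\<lambda>\<omega>. (g (T i \<omega>))\<^sup>2)"
    and "\<And>i. expectation (\<lambda>\<omega>. g (T i \<omega>)) = 0"
    and "\<And>i. expectation (\<lambda>\<omega>. (g (T i \<omega>))\<^sup>2) = expectation (\<lambda>\<omega>. (g (T 0 \<omega>))\<^sup>2)"
proof -
  show "indep_vars (\<lambda>_. borel) (\<lambda>i \<omega>. g (T i \<omega>)) UNIV"
    by (rule indep_vars_compose2[OF indepT]) simp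
  have g2[measurable]: "(\<lambda>x. (g x)\<^sup>2) \<in> borel_measurable borel" by measurable
  fix i
  show "integrable M (\<lambda>\<omega>. (g (T i \<omega>))\<^sup>2)"
    using T_integral(2)[OF g2, of i] sq by simp
  show "expectation (\<lambda>\<omega>. g (T i \<omega>)) = 0"
    using T_integral(1)[of g i] mn by simp
  show "expectation (\<lambda>\<omega>. (g (T i \<omega>))\<^sup>2) = expectation (\<lambda>\<omega>. (g (T 0 \<omega>))\<^sup>2)"
    using T_integral(1)[OF g2, of i] by simp
qed

end

lemma ineq4: "((a::real) - b) ^ 4 \<le> 8 * (a ^ 4 + b ^ 4)"
proof -
  have "(a - b)\<^sup>2 \<le> 2 * (a\<^sup>2 + b\<^sup>2)"
    using zero_le_power2[of "a + b"] by (simp add: power2_eq_square power4_eq_xxxx algebra_simps)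
  then have "((a - b)\<^sup>2)\<^sup>2 \<le> (2 * (a\<^sup>2 + b\<^sup>2))\<^sup>2"
    by (intro power_mono) auto
  moreover have "(2 * (a\<^sup>2 + b\<^sup>2))\<^sup>2 \<le> 8 * (a ^ 4 + b ^ 4)"
    using zero_le_power2[of "a\<^sup>2 - b\<^sup>2"] by (simp add: power2_eq_square power4_eq_xxxx algebra_simps)
  moreover have "((a - b)\<^sup>2)\<^sup>2 = (a - b) ^ 4" by simp
  ultimately show ?thesis by linarith
qed

lemma ineq_sq4: "(x::real)\<^sup>2 \<le> 1 + x ^ 4"
proof -
  have "0 \<le> (x\<^sup>2 - 1)\<^sup>2" by simp
  then have "2 * x\<^sup>2 \<le> 1 + x ^ 4" by (simp add: power2_eq_square power4_eq_xxxx algebra_simps)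
  then show ?thesis using zero_le_power2[of x] by linarith
qed

lemma ineq_zz: "\<bar>((x::real)\<^sup>2 - 1)\<^sup>2\<bar> \<le> x ^ 4 + 1"
proof -
  have "((x\<^sup>2 - 1)\<^sup>2) = x ^ 4 - 2 * x\<^sup>2 + 1" by (simp add: power2_eq_square power4_eq_xxxx algebra_simps)
  moreover have "\<bar>(x\<^sup>2 - 1)\<^sup>2\<bar> = (x\<^sup>2 - 1)\<^sup>2" by simp
  ultimately show ?thesis using zero_le_power2[of x] by linarith
qed

lemma (in prob_space) ibound:
  fixes g :: "'a \<Rightarrow> real"
  assumes "integrable M f" "g \<in> borel_measurable M" "\<And>\<omega>. \<bar>g \<omega>\<bar> \<le> f \<omega>"
  shows "integrable M g"
proof (rule Bochner_Integration.integrable_bound[OF assms(1,2)])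
  show "AE \<omega> in M. norm (g \<omega>) \<le> norm (f \<omega>)"
    using assms(3) by (intro AE_I2) (smt (verit) real_norm_def)
qed

context ivm
begin

definition "zc \<omega> = Z 0 \<omega> - mu"

lemma iZ2: "integrable M (\<lambda>\<omega>. (Z 0 \<omega>)\<^sup>2)"
  by (rule ibound[where f="\<lambda>\<omega>. 1 + (Z 0 \<omega>) ^ 4"]) (auto intro: int_Z4 ineq_sq4)

lemma iZ: "integrable M (Z 0)"
  by (rule square_integrable_imp_integrable[OF _ iZ2]) simp

lemma Ezc: "expectation zc = 0"
  unfolding zc_def mu_def using iZ by (simp add: prob_space)

lemma izc: "integrable M zc"
  unfolding zc_def using iZ by simp

lemma izc2: "integrable M (\<lambda>\<omega>. (zc \<omega>)\<^sup>2)"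
proof -
  have "(\<lambda>\<omega>. (zc \<omega>)\<^sup>2) = (\<lambda>\<omega>. (Z 0 \<omega>)\<^sup>2 - 2 * mu * Z 0 \<omega> + mu\<^sup>2)"
    by (auto simp: zc_def power2_eq_square algebra_simps)
  then show ?thesis using iZ2 iZ by simp
qed

lemma Ezc2: "expectation (\<lambda>\<omega>. (zc \<omega>)\<^sup>2) = 1"
  using var_Z unfolding zc_def mu_def .

lemma izc4: "integrable M (\<lambda>\<omega>. (zc \<omega>) ^ 4)"
proof (rule ibound[where f="\<lambda>\<omega>. 8 * ((Z 0 \<omega>) ^ 4 + mu ^ 4)"])
  show "integrable M (\<lambda>\<omega>. 8 * ((Z 0 \<omega>) ^ 4 + mu ^ 4))" using int_Z4 by simp
  show "(\<lambda>\<omega>. (zc \<omega>) ^ 4) \<in> borel_measurable M" unfolding zc_def by measurable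
  fix \<omega>
  show "\<bar>(zc \<omega>) ^ 4\<bar> \<le> 8 * ((Z 0 \<omega>) ^ 4 + mu ^ 4)"
    unfolding zc_def using ineq4[of "Z 0 \<omega>" mu] by simp
qed


lemma izz2: "integrable M (\<lambda>\<omega>. ((zc \<omega>)\<^sup>2 - 1)\<^sup>2)"
proof (rule ibound[where f="\<lambda>\<omega>. (zc \<omega>) ^ 4 + 1"])
  show "integrable M (\<lambda>\<omega>. (zc \<omega>) ^ 4 + 1)" using izc4 by simp
  show "(\<lambda>\<omega>. ((zc \<omega>)\<^sup>2 - 1)\<^sup>2) \<in> borel_measurable M" unfolding zc_def by measurable
qed (rule ineq_zz)

lemma Ezz: "expectation (\<lambda>\<omega>. (zc \<omega>)\<^sup>2 - 1) = 0"
  using izc2 Ezc2 by (simp add: prob_space)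

lemma ie: "integrable M (eps 0)"
  by (rule square_integrable_imp_integrable[OF _ int_e2]) simp

lemma ih: "integrable M (eta 0)"
  by (rule square_integrable_imp_integrable[OF _ int_h2]) simp

lemma mom_X:
  shows "integrable M (\<lambda>\<omega>. (eps 0 \<omega> * zc \<omega>)\<^sup>2)"
    and "expectation (\<lambda>\<omega>. (eps 0 \<omega> * zc \<omega>)\<^sup>2) = sig_e2"
    and "expectation (\<lambda>\<omega>. eps 0 \<omega> * zc \<omega>) = 0"
proof -
  have f1: "(\<lambda>p::real\<times>real. (fst p)\<^sup>2) \<in> borel_measurable borel" by (intro borel_measurable_continuous_onI continuous_intros)
  have h1: "(\<lambda>c::real. (c - mu)\<^sup>2) \<in> borel_measurable borel" by (intro borel_measurable_continuous_onI continuous_intros)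
  have f2: "(\<lambda>p::real\<times>real. fst p) \<in> borel_measurable borel" by (intro borel_measurable_continuous_onI continuous_intros)
  have h2: "(\<lambda>c::real. c - mu) \<in> borel_measurable borel" by (intro borel_measurable_continuous_onI continuous_intros)
  note A = indep_prod[OF f1 h1, simplified, OF int_e2 izc2[unfolded zc_def]]
  note B = indep_prod[OF f2 h2, simplified, OF ie izc[unfolded zc_def]]
  have eq: "(\<lambda>\<omega>. (eps 0 \<omega> * zc \<omega>)\<^sup>2) = (\<lambda>\<omega>. (eps 0 \<omega>)\<^sup>2 * (Z 0 \<omega> - mu)\<^sup>2)"
    by (simp add: zc_def power_mult_distrib)
  show "integrable M (\<lambda>\<omega>. (eps 0 \<omega> * zc \<omega>)\<^sup>2)" unfolding eq using A(1) .
  show "expectation (\<lambda>\<omega>. (eps 0 \<omega> * zc \<omega>)\<^sup>2) = sig_e2"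
    unfolding eq A(2) using var_e Ezc2 by (simp add: zc_def)
  show "expectation (\<lambda>\<omega>. eps 0 \<omega> * zc \<omega>) = 0"
    using B(2) mean_e by (simp add: zc_def)
qed

lemma mom_hz:
  shows "integrable M (\<lambda>\<omega>. (eta 0 \<omega> * zc \<omega>)\<^sup>2)"
    and "expectation (\<lambda>\<omega>. eta 0 \<omega> * zc \<omega>) = 0"
proof -
  have f1: "(\<lambda>p::real\<times>real. (snd p)\<^sup>2) \<in> borel_measurable borel" by (intro borel_measurable_continuous_onI continuous_intros)
  have h1: "(\<lambda>c::real. (c - mu)\<^sup>2) \<in> borel_measurable borel" by (intro borel_measurable_continuous_onI continuous_intros)
  have f2: "(\<lambda>p::real\<times>real. snd p) \<in> borel_measurable borel" by (intro borel_measurable_continuous_onI continuous_intros)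
  have h2: "(\<lambda>c::real. c - mu) \<in> borel_measurable borel" by (intro borel_measurable_continuous_onI continuous_intros)
  note A = indep_prod[OF f1 h1, simplified, OF int_h2 izc2[unfolded zc_def]]
  note B = indep_prod[OF f2 h2, simplified, OF ih izc[unfolded zc_def]]
  have eq: "(\<lambda>\<omega>. (eta 0 \<omega> * zc \<omega>)\<^sup>2) = (\<lambda>\<omega>. (eta 0 \<omega>)\<^sup>2 * (Z 0 \<omega> - mu)\<^sup>2)"
    by (simp add: zc_def power_mult_distrib)
  show "integrable M (\<lambda>\<omega>. (eta 0 \<omega> * zc \<omega>)\<^sup>2)" unfolding eq using A(1) .
  show "expectation (\<lambda>\<omega>. eta 0 \<omega> * zc \<omega>) = 0"
    using B(2) mean_h by (simp add: zc_def)
qed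

definition "gX x = fst (fst x) * (snd x - mu)"
definition "gE x = fst (fst x)"
definition "gH x = snd (fst x)"
definition "gZ x = snd x - mu"
definition "gZZ x = (snd x - mu)\<^sup>2 - 1"
definition "gHZ x = snd (fst x) * (snd x - mu)"

lemma g_meas[measurable]:
  "gX \<in> borel_measurable borel" "gE \<in> borel_measurable borel" "gH \<in> borel_measurable borel"
  "gZ \<in> borel_measurable borel" "gZZ \<in> borel_measurable borel" "gHZ \<in> borel_measurable borel"
  unfolding gX_def[abs_def] gE_def[abs_def] gH_def[abs_def] gZ_def[abs_def] gZZ_def[abs_def] gHZ_def[abs_def]
  by (intro borel_measurable_continuous_onI continuous_intros)+

lemma g_T0:
  "gX (T 0 \<omega>) = eps 0 \<omega> * zc \<omega>" "gE (T 0 \<omega>) = eps 0 \<omega>" "gH (T 0 \<omega>) = eta 0 \<omega>"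
  "gZ (T 0 \<omega>) = zc \<omega>" "gZZ (T 0 \<omega>) = (zc \<omega>)\<^sup>2 - 1" "gHZ (T 0 \<omega>) = eta 0 \<omega> * zc \<omega>"
  by (simp_all add: gX_def gE_def gH_def gZ_def gZZ_def gHZ_def T_def zc_def)

lemma fam_X: "indep_vars (\<lambda>_. borel) (\<lambda>i \<omega>. gX (T i \<omega>)) UNIV"
  "\<And>i. integrable M (\<lambda>\<omega>. (gX (T i \<omega>))\<^sup>2)" "\<And>i. expectation (\<lambda>\<omega>. gX (T i \<omega>)) = 0"
  "\<And>i. expectation (\<lambda>\<omega>. (gX (T i \<omega>))\<^sup>2) = sig_e2"
  using iid_family[OF g_meas(1)] mom_X by (simp_all add: g_T0)

lemma fam_E: "indep_vars (\<lambda>_. borel) (\<lambda>i \<omega>. gE (T i \<omega>)) UNIV"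
  "\<And>i. integrable M (\<lambda>\<omega>. (gE (T i \<omega>))\<^sup>2)" "\<And>i. expectation (\<lambda>\<omega>. gE (T i \<omega>)) = 0"
  "\<And>i. expectation (\<lambda>\<omega>. (gE (T i \<omega>))\<^sup>2) = sig_e2"
  using iid_family[OF g_meas(2)] int_e2 mean_e var_e by (simp_all add: g_T0)

lemma fam_H: "indep_vars (\<lambda>_. borel) (\<lambda>i \<omega>. gH (T i \<omega>)) UNIV"
  "\<And>i. integrable M (\<lambda>\<omega>. (gH (T i \<omega>))\<^sup>2)" "\<And>i. expectation (\<lambda>\<omega>. gH (T i \<omega>)) = 0"
  "\<And>i. expectation (\<lambda>\<omega>. (gH (T i \<omega>))\<^sup>2) = expectation (\<lambda>\<omega>. (gH (T 0 \<omega>))\<^sup>2)"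
  using iid_family[OF g_meas(3)] int_h2 mean_h by (simp_all add: g_T0)

lemma fam_Z: "indep_vars (\<lambda>_. borel) (\<lambda>i \<omega>. gZ (T i \<omega>)) UNIV"
  "\<And>i. integrable M (\<lambda>\<omega>. (gZ (T i \<omega>))\<^sup>2)" "\<And>i. expectation (\<lambda>\<omega>. gZ (T i \<omega>)) = 0"
  "\<And>i. expectation (\<lambda>\<omega>. (gZ (T i \<omega>))\<^sup>2) = expectation (\<lambda>\<omega>. (gZ (T 0 \<omega>))\<^sup>2)"
  using iid_family[OF g_meas(4)] izc2 Ezc by (simp_all add: g_T0)

lemma fam_ZZ: "indep_vars (\<lambda>_. borel) (\<lambda>i \<omega>. gZZ (T i \<omega>)) UNIV"
  "\<And>i. integrable M (\<lambda>\<omega>. (gZZ (T i \<omega>))\<^sup>2)" "\<And>i. expectation (\<lambda>\<omega>. gZZ (T i \<omega>)) = 0"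
  "\<And>i. expectation (\<lambda>\<omega>. (gZZ (T i \<omega>))\<^sup>2) = expectation (\<lambda>\<omega>. (gZZ (T 0 \<omega>))\<^sup>2)"
  using iid_family[OF g_meas(5)] izz2 Ezz by (simp_all add: g_T0)

lemma fam_HZ: "indep_vars (\<lambda>_. borel) (\<lambda>i \<omega>. gHZ (T i \<omega>)) UNIV"
  "\<And>i. integrable M (\<lambda>\<omega>. (gHZ (T i \<omega>))\<^sup>2)" "\<And>i. expectation (\<lambda>\<omega>. gHZ (T i \<omega>)) = 0"
  "\<And>i. expectation (\<lambda>\<omega>. (gHZ (T i \<omega>))\<^sup>2) = expectation (\<lambda>\<omega>. (gHZ (T 0 \<omega>))\<^sup>2)"
  using iid_family[OF g_meas(6)] mom_hz by (simp_all add: g_T0)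

lemma distr_gX: "distr M borel (\<lambda>\<omega>. gX (T i \<omega>)) = distr M borel (\<lambda>\<omega>. gX (T 0 \<omega>))"
proof -
  have "distr M borel (\<lambda>\<omega>. gX (T i \<omega>)) = distr (distr M borel (T i)) borel gX"
    by (subst distr_distr) (auto simp: comp_def)
  also have "\<dots> = distr (distr M borel (T 0)) borel gX" by (simp add: distr_T[of i])
  also have "\<dots> = distr M borel (\<lambda>\<omega>. gX (T 0 \<omega>))"
    by (subst distr_distr) (auto simp: comp_def)
  finally show ?thesis .
qed

end

definition ccov :: "nat \<Rightarrow> (nat \<Rightarrow> real) \<Rightarrow> (nat \<Rightarrow> real) \<Rightarrow> real" where
  "ccov n a b = (\<Sum>i<n. (a i - smean n a) * (b i - smean n b))"

lemma smean_affine: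
  assumes "n > 0"
  shows "smean n (\<lambda>i. a + b * f i + g i) = a + b * smean n f + smean n g"
  using assms by (simp add: smean_def sum.distrib sum_distrib_left[symmetric] field_simps)

lemma smean_shift:
  assumes "n > 0"
  shows "smean n (\<lambda>i. f i - c) = smean n f - c"
  using assms by (simp add: smean_def sum_subtractf field_simps)

lemma ccov_formula:
  assumes n: "n > 0"
  shows "ccov n a b = (\<Sum>i<n. a i * b i) - (\<Sum>i<n. a i) * (\<Sum>i<n. b i) / real n"
proof -
  have "ccov n a b = (\<Sum>i<n. a i * b i - smean n b * a i - smean n a * b i + smean n a * smean n b)"
    unfolding ccov_def by (intro sum.cong) (auto simp: algebra_simps)
  also have "\<dots> = (\<Sum>i<n. a i * b i) - smean n b * (\<Sum>i<n. a i) - smean n a * (\<Sum>i<n. b i)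
      + real n * (smean n a * smean n b)"
    by (simp add: sum.distrib sum_subtractf sum_distrib_left)
  also have "\<dots> = (\<Sum>i<n. a i * b i) - (\<Sum>i<n. a i) * (\<Sum>i<n. b i) / real n"
    using n by (simp add: smean_def field_simps)
  finally show ?thesis .
qed

lemma ccov_lin:
  assumes n: "n > 0"
  shows "ccov n (\<lambda>i. a + b * f i + g i) c = b * ccov n f c + ccov n g c"
proof -
  have "ccov n (\<lambda>i. a + b * f i + g i) c =
      (\<Sum>i<n. b * ((f i - smean n f) * (c i - smean n c)) + (g i - smean n g) * (c i - smean n c))"
    unfolding ccov_def smean_affine[OF n] by (intro sum.cong) (auto simp: algebra_simps)
  also have "\<dots> = b * ccov n f c + ccov n g c"
    unfolding ccov_def by (simp add: sum.distrib sum_distrib_left)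
  finally show ?thesis .
qed

lemma ccov_shift2:
  assumes n: "n > 0"
  shows "ccov n a (\<lambda>i. c i + m) = ccov n a c"
proof -
  have "smean n (\<lambda>i. c i + m) = smean n c + m"
    using smean_affine[OF n, of m 1 c "\<lambda>i. 0"] n by (simp add: smean_def add.commute)
  then show ?thesis unfolding ccov_def by simp
qed

lemma ridge_alg:
  fixes e h Zv :: "nat \<Rightarrow> real" and mu lam beta0 beta1 pi0 pi1 :: real
  assumes n: "n > 0"
    and V0: "pi1 + pi1 * ((\<Sum>i<n. (Zv i - mu)\<^sup>2 - 1) / real n)
          - pi1 * (((\<Sum>i<n. Zv i - mu) / real n) * ((\<Sum>i<n. Zv i - mu) / real n))
          + (\<Sum>i<n. h i * (Zv i - mu)) / real n
          - ((\<Sum>i<n. h i) / real n) * ((\<Sum>i<n. Zv i - mu) / real n) + lam / real n \<noteq> 0"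
  shows "sqrt (real n) * (ridge_iv n lam (\<lambda>i. beta0 + beta1 * (pi0 + pi1 * Zv i + h i) + e i)
            (\<lambda>i. pi0 + pi1 * Zv i + h i) Zv - beta1)
       = ((\<Sum>i<n. e i * (Zv i - mu)) / sqrt (real n)
          - ((\<Sum>i<n. e i) / sqrt (real n)) * ((\<Sum>i<n. Zv i - mu) / real n) - beta1 * lam / sqrt (real n))
         / (pi1 + pi1 * ((\<Sum>i<n. (Zv i - mu)\<^sup>2 - 1) / real n)
          - pi1 * (((\<Sum>i<n. Zv i - mu) / real n) * ((\<Sum>i<n. Zv i - mu) / real n))
          + (\<Sum>i<n. h i * (Zv i - mu)) / real n
          - ((\<Sum>i<n. h i) / real n) * ((\<Sum>i<n. Zv i - mu) / real n) + lam / real n)"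
  (is "?L = ?R")
proof -
  define z where "z i = Zv i - mu" for i
  have Zv: "Zv = (\<lambda>i. z i + mu)" by (simp add: z_def fun_eq_iff)
  define Sx where "Sx = (\<Sum>i<n. e i * z i)"
  define Se where "Se = (\<Sum>i<n. e i)"
  define Sh where "Sh = (\<Sum>i<n. h i)"
  define Sz where "Sz = (\<Sum>i<n. z i)"
  define Szz where "Szz = (\<Sum>i<n. (z i)\<^sup>2 - 1)"
  define Shz where "Shz = (\<Sum>i<n. h i * z i)"
  define V where "V = pi1 + pi1 * (Szz / real n) - pi1 * ((Sz / real n) * (Sz / real n))
          + Shz / real n - (Sh / real n) * (Sz / real n) + lam / real n"
  have V: "V \<noteq> 0" using V0 unfolding V_def Szz_def Sz_def Shz_def Sh_def z_def .
  define B where "B = ccov n (\<lambda>i. pi0 + pi1 * Zv i + h i) Zv"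
  define A where "A = ccov n e Zv"
  have num: "ccov n (\<lambda>i. beta0 + beta1 * (pi0 + pi1 * Zv i + h i) + e i) Zv = beta1 * B + A"
    unfolding B_def A_def by (rule ccov_lin[OF n])
  have A: "A = Sx - Se * Sz / real n"
    unfolding A_def Zv ccov_shift2[OF n] ccov_formula[OF n] Sx_def Se_def Sz_def ..
  have zz: "(\<Sum>i<n. z i * z i) = Szz + real n"
    unfolding Szz_def by (simp add: sum_subtractf power2_eq_square)
  have B: "B = pi1 * (Szz + real n - Sz * Sz / real n) + (Shz - Sh * Sz / real n)"
  proof -
    have "B = pi1 * ccov n Zv Zv + ccov n h Zv"
      unfolding B_def by (rule ccov_lin[OF n])
    also have "ccov n Zv Zv = ccov n z z"
    proof -
      have "ccov n Zv Zv = ccov n Zv z" unfolding Zv ccov_shift2[OF n] ..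
      also have "\<dots> = ccov n z Zv"
        unfolding ccov_def by (simp add: mult.commute)
      also have "\<dots> = ccov n z z" unfolding Zv ccov_shift2[OF n] ..
      finally show ?thesis .
    qed
    also have "ccov n h Zv = Shz - Sh * Sz / real n"
      unfolding Zv ccov_shift2[OF n] ccov_formula[OF n] Shz_def Sh_def Sz_def ..
    finally show ?thesis
      unfolding ccov_formula[OF n] zz Sz_def by simp
  qed
  have BV: "B + lam = real n * V"
    unfolding B V_def using n by (simp add: field_simps)
  have Bl: "B + lam \<noteq> 0" using BV V n by simp
  have ridge: "ridge_iv n lam (\<lambda>i. beta0 + beta1 * (pi0 + pi1 * Zv i + h i) + e i)
            (\<lambda>i. pi0 + pi1 * Zv i + h i) Zv = (beta1 * B + A) / (B + lam)"
    unfolding ridge_iv_def num[unfolded ccov_def] B_def[unfolded ccov_def] ..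
  have sn: "sqrt (real n) > 0" using n by simp
  have snn: "sqrt (real n) * sqrt (real n) = real n" by simp
  have "?L = sqrt (real n) * ((A - beta1 * lam) / (B + lam))"
    unfolding ridge using Bl by (simp add: field_simps)
  also have "\<dots> = sqrt (real n) * (A - beta1 * lam) / (sqrt (real n) * sqrt (real n) * V)"
    unfolding BV snn by simp
  also have "\<dots> = (A / sqrt (real n) - beta1 * lam / sqrt (real n)) / V"
    using sn V by (simp add: field_simps)
  also have "\<dots> = (Sx / sqrt (real n) - (Se / sqrt (real n)) * (Sz / real n) - beta1 * lam / sqrt (real n)) / V"
  proof -
    have "A / sqrt (real n) = Sx / sqrt (real n) - (Se / sqrt (real n)) * (Sz / real n)"
      unfolding A using sn by (simp add: field_simps)
    then show ?thesis by simp
  qed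
  also have "\<dots> = ?R"
    unfolding V_def Sx_def Se_def Sz_def Szz_def Shz_def Sh_def z_def ..
  finally show ?thesis .
qed

lemma (in prob_space) cp0_transfer:
  assumes X: "cp0 M X" and W: "cp0 M W" and c: "c > 0"
    and Y[measurable]: "\<And>n. Y n \<in> borel_measurable M"
    and eq: "\<And>n \<omega>. n \<ge> 1 \<Longrightarrow> \<omega> \<in> space M \<Longrightarrow> \<bar>W n \<omega>\<bar> \<le> c \<Longrightarrow> Y n \<omega> = X n \<omega>"
  shows "cp0 M Y"
proof (rule cp0_bound2[OF X W Y])
  fix d :: real assume d: "d > 0"
  show "\<exists>e>0. \<forall>\<^sub>F n in sequentially. \<forall>\<omega>\<in>space M. d < \<bar>Y n \<omega>\<bar> \<longrightarrow> e < \<bar>X n \<omega>\<bar> \<or> e < \<bar>W n \<omega>\<bar>"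
  proof (intro exI[of _ "min d c"] conjI)
    show "0 < min d c" using d c by simp
    show "\<forall>\<^sub>F n in sequentially. \<forall>\<omega>\<in>space M. d < \<bar>Y n \<omega>\<bar> \<longrightarrow> min d c < \<bar>X n \<omega>\<bar> \<or> min d c < \<bar>W n \<omega>\<bar>"
      unfolding eventually_sequentially
    proof (intro exI[of _ 1] allI impI ballI)
      fix n \<omega> assume n: "1 \<le> n" and \<omega>: "\<omega> \<in> space M" and a: "d < \<bar>Y n \<omega>\<bar>"
      show "min d c < \<bar>X n \<omega>\<bar> \<or> min d c < \<bar>W n \<omega>\<bar>"
      proof (cases "\<bar>W n \<omega>\<bar> \<le> c")
        case True then show ?thesis using eq[OF n \<omega> True] a by auto
      next
        case False then show ?thesis by auto
      qed
    qed
  qed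
qed

lemma (in prob_space) weak_conv_scale:
  assumes [measurable]: "\<And>n. W n \<in> borel_measurable M"
    and conv: "weak_conv_m (\<lambda>n. distr M borel (W n)) \<nu>" and nu: "real_distribution \<nu>"
  shows "weak_conv_m (\<lambda>n. distr M borel (\<lambda>\<omega>. c * W n \<omega>)) (distr \<nu> borel (\<lambda>x. c * x))"
proof -
  interpret nu: real_distribution \<nu> by fact
  have [measurable]: "(\<lambda>x::real. c * x) \<in> borel_measurable \<nu>"
    by (simp add: measurable_cong_sets[OF nu.events_eq_borel refl])
  have rd: "real_distribution (distr \<nu> borel (\<lambda>x. c * x))"
    by (rule nu.real_distribution_distr) simp
  show ?thesis
  proof (rule integral_bdd_continuous_conv_imp_weak_conv)
    show "real_distribution (distr M borel (\<lambda>\<omega>. c * W n \<omega>))" for n by simp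
    show "real_distribution (distr \<nu> borel (\<lambda>x. c * x))" by (rule rd)
    fix f :: "real \<Rightarrow> real" assume fc: "\<And>x. isCont f x" and fb: "\<And>x. \<bar>f x\<bar> \<le> 1"
    have fm[measurable]: "f \<in> borel_measurable borel"
      by (intro borel_measurable_continuous_onI continuous_at_imp_continuous_on) (auto simp: fc)
    have "(\<lambda>n. integral\<^sup>L (distr M borel (W n)) (\<lambda>x. f (c * x))) \<longlonglongrightarrow> integral\<^sup>L \<nu> (\<lambda>x. f (c * x))"
    proof (rule weak_conv_imp_integral_bdd_continuous_conv[where B=1])
      show "real_distribution (distr M borel (W n))" for n by simp
      show "isCont (\<lambda>x. f (c * x)) x" for x
        by (rule isCont_o2[OF _ fc]) (intro continuous_intros)
    qed (auto simp: nu conv fb)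
    then show "(\<lambda>n. integral\<^sup>L (distr M borel (\<lambda>\<omega>. c * W n \<omega>)) f) \<longlonglongrightarrow> integral\<^sup>L (distr \<nu> borel (\<lambda>x. c * x)) f"
      by (simp add: integral_distr)
  qed
qed

lemma normal_scale:
  assumes c: "c \<noteq> 0"
  shows "distr std_normal_distribution borel (\<lambda>x. c * x) = density lborel (normal_density 0 \<bar>c\<bar>)"
proof -
  interpret N: prob_space std_normal_distribution
    using real_dist_normal_dist by (simp add: real_distribution_def)
  have d: "distributed std_normal_distribution lborel (\<lambda>x. x) (normal_density 0 1)"
    unfolding distributed_def by (auto simp: distr_id2)
  have "distributed std_normal_distribution lborel (\<lambda>x. 0 + c * x) (normal_density (0 + c * 0) (\<bar>c\<bar> * 1))"
    by (rule N.normal_density_affine[OF d]) (use c in auto)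
  then have "distr std_normal_distribution lborel (\<lambda>x. c * x) = density lborel (normal_density 0 \<bar>c\<bar>)"
    unfolding distributed_def by simp
  moreover have "distr std_normal_distribution borel (\<lambda>x. c * x) = distr std_normal_distribution lborel (\<lambda>x. c * x)"
    by (rule distr_cong) auto
  ultimately show ?thesis by simp
qed

lemma inv_sqrt_lim: "(\<lambda>n. 1 / sqrt (real n)) \<longlonglongrightarrow> 0"
proof -
  have "(\<lambda>n. sqrt (1 / real n)) \<longlonglongrightarrow> sqrt 0"
    by (intro tendsto_real_sqrt lim_inverse_n')
  then show ?thesis by (simp add: real_sqrt_divide)
qed

lemma ridge_meas:
  fixes Yf Df Zf :: "nat \<Rightarrow> 'a \<Rightarrow> real"
  assumes Y: "\<And>i. Yf i \<in> borel_measurable M" and D: "\<And>i. Df i \<in> borel_measurable M"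
    and Z: "\<And>i. Zf i \<in> borel_measurable M"
  shows "(\<lambda>\<omega>. ridge_iv n l (\<lambda>i. Yf i \<omega>) (\<lambda>i. Df i \<omega>) (\<lambda>i. Zf i \<omega>)) \<in> borel_measurable M"
proof -
  have sm: "(\<lambda>\<omega>. smean n (\<lambda>i. F i \<omega>)) \<in> borel_measurable M" if "\<And>i. F i \<in> borel_measurable M" for F
    unfolding smean_def by (intro borel_measurable_divide borel_measurable_sum borel_measurable_const that)
  show ?thesis
    unfolding ridge_iv_def
    by (intro borel_measurable_divide borel_measurable_add borel_measurable_sum borel_measurable_times
        borel_measurable_diff borel_measurable_const sm Y D Z)
qed

context ivm
begin

lemma main:
  fixes beta0 beta1 pi0 pi1 :: real and lam :: "nat \<Rightarrow> real"
  assumes pi1_nz: "pi1 \<noteq> 0" and lam_small: "(\<lambda>n. lam n / sqrt (real n)) \<longlonglongrightarrow> 0"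
  shows "weak_conv_m
           (\<lambda>n. distr M borel (\<lambda>\<omega>.
              let D = (\<lambda>i. pi0 + pi1 * Z i \<omega> + eta i \<omega>);
                  Y = (\<lambda>i. beta0 + beta1 * D i + eps i \<omega>)
              in sqrt (real n) * (ridge_iv n (lam n) Y D (\<lambda>i. Z i \<omega>) - beta1)))
           (normal_measure 0 (sig_e2 / pi1\<^sup>2))"
proof -
  define Tm where "Tm n \<omega> = (let D = (\<lambda>i. pi0 + pi1 * Z i \<omega> + eta i \<omega>);
                  Y = (\<lambda>i. beta0 + beta1 * D i + eps i \<omega>)
              in sqrt (real n) * (ridge_iv n (lam n) Y D (\<lambda>i. Z i \<omega>) - beta1))" for n \<omega>
  have Tm_meas[measurable]: "Tm n \<in> borel_measurable M" for n
    unfolding Tm_def Let_def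
    by (intro borel_measurable_times borel_measurable_diff borel_measurable_const ridge_meas) measurable
  define SX where "SX n \<omega> = (\<Sum>i<n. gX (T i \<omega>))" for n \<omega>
  define SE where "SE n \<omega> = (\<Sum>i<n. gE (T i \<omega>))" for n \<omega>
  define SH where "SH n \<omega> = (\<Sum>i<n. gH (T i \<omega>))" for n \<omega>
  define SZ where "SZ n \<omega> = (\<Sum>i<n. gZ (T i \<omega>))" for n \<omega>
  define SZZ where "SZZ n \<omega> = (\<Sum>i<n. gZZ (T i \<omega>))" for n \<omega>
  define SHZ where "SHZ n \<omega> = (\<Sum>i<n. gHZ (T i \<omega>))" for n \<omega>
  have [measurable]: "SX n \<in> borel_measurable M" "SE n \<in> borel_measurable M" "SH n \<in> borel_measurable M"
    "SZ n \<in> borel_measurable M" "SZZ n \<in> borel_measurable M" "SHZ n \<in> borel_measurable M" for n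
    unfolding SX_def[abs_def] SE_def[abs_def] SH_def[abs_def] SZ_def[abs_def] SZZ_def[abs_def] SHZ_def[abs_def]
    by (auto intro!: borel_measurable_sum measurable_compose[OF T_meas] g_meas)
  have cpZ: "cp0 M (\<lambda>n \<omega>. SZ n \<omega> / real n)"
    unfolding SZ_def by (rule wlln[OF fam_Z])
  have cpH: "cp0 M (\<lambda>n \<omega>. SH n \<omega> / real n)"
    unfolding SH_def by (rule wlln[OF fam_H])
  have cpZZ: "cp0 M (\<lambda>n \<omega>. SZZ n \<omega> / real n)"
    unfolding SZZ_def by (rule wlln[OF fam_ZZ])
  have cpHZ: "cp0 M (\<lambda>n \<omega>. SHZ n \<omega> / real n)"
    unfolding SHZ_def by (rule wlln[OF fam_HZ])
  note tE = tight_sum[OF fam_E, folded SE_def]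
  note tX = tight_sum[OF fam_X, folded SX_def]
  have lam_n: "(\<lambda>n. lam n / real n) \<longlonglongrightarrow> 0"
  proof -
    have "(\<lambda>n. (lam n / sqrt (real n)) * (1 / sqrt (real n))) \<longlonglongrightarrow> 0 * 0"
      by (intro tendsto_mult lam_small inv_sqrt_lim)
    moreover have "(lam n / sqrt (real n)) * (1 / sqrt (real n)) = lam n / real n" for n
      by (cases "n = 0") (auto simp: field_simps)
    ultimately show ?thesis by simp
  qed
  have b_n: "(\<lambda>n. beta1 * (lam n / sqrt (real n))) \<longlonglongrightarrow> 0"
    using tendsto_mult_right_zero[OF lam_small] .
  define Vm1 where "Vm1 n \<omega> = pi1 * (SZZ n \<omega> / real n) - pi1 * ((SZ n \<omega> / real n) * (SZ n \<omega> / real n))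
      + SHZ n \<omega> / real n - (SH n \<omega> / real n) * (SZ n \<omega> / real n) + lam n / real n" for n \<omega>
  have cpV1: "cp0 M Vm1"
    unfolding Vm1_def[abs_def]
    by (intro cp0_add cp0_diff cp0_scale cp0_mult cpZ cpH cpZZ cpHZ cp0_det lam_n)
  define V where "V n \<omega> = pi1 + Vm1 n \<omega>" for n \<omega>
  have [measurable]: "V n \<in> borel_measurable M" for n
    unfolding V_def using cp0_meas[OF cpV1] by simp
  have cpV: "cp0 M (\<lambda>n \<omega>. V n \<omega> - pi1)"
    using cpV1 by (simp add: V_def)
  have cpIV: "cp0 M (\<lambda>n \<omega>. 1 / V n \<omega> - 1 / pi1)"
    by (rule cp0_inv[OF cpV pi1_nz])
  define R where "R n \<omega> = (-1) * ((SE n \<omega> / sqrt (real n)) * (SZ n \<omega> / real n)) - beta1 * (lam n / sqrt (real n))" for n \<omega>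
  have cpR: "cp0 M R"
    unfolding R_def[abs_def]
    by (intro cp0_diff cp0_scale cp0_det b_n cp0_tight_mult[OF cpZ _ tE(1) tE(2)]) measurable
  define Dd where "Dd n \<omega> = R n \<omega> * (1 / V n \<omega> - 1 / pi1) + (1 / pi1) * R n \<omega>
      + (SX n \<omega> / sqrt (real n)) * (1 / V n \<omega> - 1 / pi1)" for n \<omega>
  have cpD: "cp0 M Dd"
    unfolding Dd_def[abs_def]
    by (intro cp0_add cp0_mult cp0_scale cpR cpIV cp0_tight_mult[OF cpIV _ tX(1) tX(2)]) measurable
  define S where "S n \<omega> = (1 / pi1) * (SX n \<omega> / sqrt (real n))" for n \<omega>
  have [measurable]: "S n \<in> borel_measurable M" for n unfolding S_def by measurable
  have key: "Tm n \<omega> - S n \<omega> = Dd n \<omega>"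
    if n: "n \<ge> 1" and \<omega>: "\<omega> \<in> space M" and small: "\<bar>V n \<omega> - pi1\<bar> \<le> \<bar>pi1\<bar> / 2" for n \<omega>
  proof -
    have n0: "n > 0" using n by simp
    have V0: "V n \<omega> \<noteq> 0" using small pi1_nz by auto
    have Tm: "Tm n \<omega> = (SX n \<omega> / sqrt (real n) + R n \<omega>) / V n \<omega>"
    proof -
      have "Tm n \<omega> = ((\<Sum>i<n. eps i \<omega> * (Z i \<omega> - mu)) / sqrt (real n)
          - ((\<Sum>i<n. eps i \<omega>) / sqrt (real n)) * ((\<Sum>i<n. Z i \<omega> - mu) / real n) - beta1 * lam n / sqrt (real n))
         / (pi1 + pi1 * ((\<Sum>i<n. (Z i \<omega> - mu)\<^sup>2 - 1) / real n)
          - pi1 * (((\<Sum>i<n. Z i \<omega> - mu) / real n) * ((\<Sum>i<n. Z i \<omega> - mu) / real n))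
          + (\<Sum>i<n. eta i \<omega> * (Z i \<omega> - mu)) / real n
          - ((\<Sum>i<n. eta i \<omega>) / real n) * ((\<Sum>i<n. Z i \<omega> - mu) / real n) + lam n / real n)"
        unfolding Tm_def Let_def
      proof (rule ridge_alg[OF n0])
        show "pi1 + pi1 * ((\<Sum>i<n. (Z i \<omega> - mu)\<^sup>2 - 1) / real n)
          - pi1 * (((\<Sum>i<n. Z i \<omega> - mu) / real n) * ((\<Sum>i<n. Z i \<omega> - mu) / real n))
          + (\<Sum>i<n. eta i \<omega> * (Z i \<omega> - mu)) / real n
          - ((\<Sum>i<n. eta i \<omega>) / real n) * ((\<Sum>i<n. Z i \<omega> - mu) / real n) + lam n / real n \<noteq> 0"
          using V0 by (simp add: V_def Vm1_def SZZ_def SZ_def SHZ_def SH_def gZZ_def gZ_def gHZ_def gH_def T_def)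
      qed
      also have "\<dots> = (SX n \<omega> / sqrt (real n) + R n \<omega>) / V n \<omega>"
        by (simp add: V_def Vm1_def SZZ_def SZ_def SHZ_def SH_def SX_def SE_def R_def
            gZZ_def gZ_def gHZ_def gH_def gX_def gE_def T_def) (simp add: algebra_simps)
      finally show ?thesis .
    qed
    show ?thesis
      unfolding Tm Dd_def S_def using V0 pi1_nz n0 by (simp add: field_simps)
  qed
  have cpTS: "cp0 M (\<lambda>n \<omega>. Tm n \<omega> - S n \<omega>)"
  proof (rule cp0_transfer[OF cpD cpV])
    show "0 < \<bar>pi1\<bar> / 2" using pi1_nz by simp
  qed (use key in auto)
  have se: "sig_e2 \<ge> 0"
    using var_e[symmetric] by (simp add: integral_nonneg_AE)
  show ?thesis
  proof (cases "sig_e2 = 0")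
    case True
    have E0: "expectation (\<lambda>\<omega>. (SX n \<omega> / sqrt (real n))\<^sup>2) = 0" for n
    proof -
      have "0 \<le> expectation (\<lambda>\<omega>. (SX n \<omega> / sqrt (real n))\<^sup>2)"
        by (rule integral_nonneg_AE) simp
      then show ?thesis using tX(2)[of n] True by linarith
    qed
    have cpU: "cp0 M (\<lambda>n \<omega>. SX n \<omega> / sqrt (real n))"
      by (rule cp0_sq) (auto simp: tX(1) E0)
    have cpT: "cp0 M (\<lambda>n \<omega>. Tm n \<omega> - 0)"
    proof -
      have "cp0 M (\<lambda>n \<omega>. (Tm n \<omega> - S n \<omega>) + (1 / pi1) * (SX n \<omega> / sqrt (real n)))"
        by (intro cp0_add cpTS cp0_scale cpU)
      then show ?thesis by (simp add: S_def)
    qed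
    have nm: "normal_measure 0 (sig_e2 / pi1\<^sup>2) = return borel 0"
      using True by (simp add: normal_measure_def)
    have "weak_conv_m (\<lambda>n. distr M borel (Tm n)) (return borel 0)"
    proof (rule slutsky[where S="\<lambda>n \<omega>. 0"])
      show "weak_conv_m (\<lambda>n. distr M borel (\<lambda>\<omega>. 0)) (return borel 0)"
        by (simp add: weak_conv_m_def weak_conv_def)
      show "real_distribution (return borel (0::real))"
        by (simp add: real_distribution_def real_distribution_axioms_def prob_space_return)
    qed (use cpT in auto)
    then show ?thesis unfolding nm Tm_def .
  next
    case False
    then have sp: "sig_e2 > 0" using se by simp
    define \<sigma> where "\<sigma> = sqrt sig_e2"
    have \<sigma>: "\<sigma> > 0" "\<sigma>\<^sup>2 = sig_e2" using sp by (auto simp: \<sigma>_def)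
    have clt: "weak_conv_m (\<lambda>n. distr M borel (\<lambda>\<omega>. SX n \<omega> / sqrt (real n * \<sigma>\<^sup>2))) std_normal_distribution"
      unfolding SX_def
    proof (rule central_limit_theorem_zero_mean[where \<mu>="distr M borel (\<lambda>\<omega>. gX (T 0 \<omega>))"])
      show "indep_vars (\<lambda>i. borel) (\<lambda>i \<omega>. gX (T i \<omega>)) UNIV" by (rule fam_X(1))
      show "expectation (\<lambda>\<omega>. gX (T n \<omega>)) = 0" for n by (rule fam_X(3))
      show "\<sigma> > 0" by (rule \<sigma>(1))
      show "integrable M (\<lambda>\<omega>. (gX (T n \<omega>))\<^sup>2)" for n by (rule fam_X(2))
      show "variance (\<lambda>\<omega>. gX (T n \<omega>)) = \<sigma>\<^sup>2" for n
        using fam_X(3)[of n] fam_X(4)[of n] \<sigma>(2) by simp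
      show "distr M borel (\<lambda>\<omega>. gX (T n \<omega>)) = distr M borel (\<lambda>\<omega>. gX (T 0 \<omega>))" for n
        by (rule distr_gX)
    qed
    define c where "c = \<sigma> / pi1"
    have c0: "c \<noteq> 0" using \<sigma> pi1_nz by (simp add: c_def)
    have sc: "weak_conv_m (\<lambda>n. distr M borel (\<lambda>\<omega>. c * (SX n \<omega> / sqrt (real n * \<sigma>\<^sup>2))))
          (distr std_normal_distribution borel (\<lambda>x. c * x))"
      by (rule weak_conv_scale[OF _ clt real_dist_normal_dist]) measurable
    have Seq: "(\<lambda>\<omega>. c * (SX n \<omega> / sqrt (real n * \<sigma>\<^sup>2))) = S n" for n
      using \<sigma>(1) pi1_nz by (auto simp: fun_eq_iff S_def c_def real_sqrt_mult)
    have nu: "distr std_normal_distribution borel (\<lambda>x. c * x) = normal_measure 0 (sig_e2 / pi1\<^sup>2)"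
    proof -
      have "\<bar>c\<bar> = sqrt (sig_e2 / pi1\<^sup>2)"
        using \<sigma> by (simp add: c_def \<sigma>_def real_sqrt_divide abs_div_pos)
      moreover have "sig_e2 / pi1\<^sup>2 \<noteq> 0" using sp pi1_nz by simp
      ultimately show ?thesis
        by (simp add: normal_scale[OF c0] normal_measure_def)
    qed
    have rdn: "real_distribution (distr std_normal_distribution borel (\<lambda>x. c * x))"
    proof -
      interpret N: real_distribution std_normal_distribution by (rule real_dist_normal_dist)
      show ?thesis by (rule N.real_distribution_distr) simp
    qed
    have "weak_conv_m (\<lambda>n. distr M borel (Tm n)) (normal_measure 0 (sig_e2 / pi1\<^sup>2))"
    proof (rule slutsky[where S=S])
      show "weak_conv_m (\<lambda>n. distr M borel (S n)) (normal_measure 0 (sig_e2 / pi1\<^sup>2))"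
        using sc unfolding Seq nu .
      show "real_distribution (normal_measure 0 (sig_e2 / pi1\<^sup>2))" using rdn unfolding nu .
    qed (use cpTS in auto)
    then show ?thesis unfolding Tm_def .
  qed
qed

end

theorem mainTheorem3:
  fixes M :: "'a measure"
    and eps eta Z :: "nat \<Rightarrow> 'a \<Rightarrow> real"
    and beta0 beta1 pi0 pi1 sig_e2 sig_h2 sig_eh m4 :: real
    and lam :: "nat \<Rightarrow> real"
  assumes P: "prob_space M"
    and meas_eps: "\<And>i. eps i \<in> borel_measurable M"
    and meas_eta: "\<And>i. eta i \<in> borel_measurable M"
    and meas_Z: "\<And>i. Z i \<in> borel_measurable M"
    \<comment> \<open>the triples are mutually independent across i, and within each i the instrument is
        independent of the error pair; together: error pairs i.i.d., Z_i i.i.d., Z independent of errors\<close>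
    and indep: "prob_space.indep_vars M (\<lambda>_. borel) (\<lambda>i \<omega>. (eps i \<omega>, eta i \<omega>, Z i \<omega>)) UNIV"
    and indep_Z_err: "\<And>i (A :: (real \<times> real) set) (B :: real set). A \<in> sets borel \<Longrightarrow> B \<in> sets borel \<Longrightarrow>
         measure M {\<omega> \<in> space M. (eps i \<omega>, eta i \<omega>) \<in> A \<and> Z i \<omega> \<in> B}
         = measure M {\<omega> \<in> space M. (eps i \<omega>, eta i \<omega>) \<in> A} * measure M {\<omega> \<in> space M. Z i \<omega> \<in> B}"
    and ident_err: "\<And>i. distr M borel (\<lambda>\<omega>. (eps i \<omega>, eta i \<omega>)) = distr M borel (\<lambda>\<omega>. (eps 0 \<omega>, eta 0 \<omega>))"
    and ident_Z: "\<And>i. distr M borel (Z i) = distr M borel (Z 0)"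
    \<comment> \<open>error moments\<close>
    and int_e2: "integrable M (\<lambda>\<omega>. (eps 0 \<omega>)\<^sup>2)"
    and int_h2: "integrable M (\<lambda>\<omega>. (eta 0 \<omega>)\<^sup>2)"
    and mean_e: "integral\<^sup>L M (eps 0) = 0"
    and mean_h: "integral\<^sup>L M (eta 0) = 0"
    and var_e: "integral\<^sup>L M (\<lambda>\<omega>. (eps 0 \<omega>)\<^sup>2) = sig_e2"
    and var_h: "integral\<^sup>L M (\<lambda>\<omega>. (eta 0 \<omega>)\<^sup>2) = sig_h2"
    and cov_eh: "integral\<^sup>L M (\<lambda>\<omega>. eps 0 \<omega> * eta 0 \<omega>) = sig_eh"
    \<comment> \<open>Assumption B: Var(Z_i) = 1, finite fourth moment\<close>
    and int_Z4: "integrable M (\<lambda>\<omega>. (Z 0 \<omega>) ^ 4)"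
    and m4_def: "integral\<^sup>L M (\<lambda>\<omega>. (Z 0 \<omega>) ^ 4) = m4"
    and var_Z: "integral\<^sup>L M (\<lambda>\<omega>. (Z 0 \<omega> - integral\<^sup>L M (Z 0))\<^sup>2) = 1"
    \<comment> \<open>relevance and penalty\<close>
    and pi1_nz: "pi1 \<noteq> 0"
    and lam_nonneg: "\<And>n. lam n \<ge> 0"
    and lam_small: "(\<lambda>n. lam n / sqrt (real n)) \<longlonglongrightarrow> 0"
  shows "weak_conv_m
           (\<lambda>n. distr M borel (\<lambda>\<omega>.
              let D = (\<lambda>i. pi0 + pi1 * Z i \<omega> + eta i \<omega>);
                  Y = (\<lambda>i. beta0 + beta1 * D i + eps i \<omega>)
              in sqrt (real n) * (ridge_iv n (lam n) Y D (\<lambda>i. Z i \<omega>) - beta1)))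
           (normal_measure 0 (sig_e2 / pi1\<^sup>2))"
proof -
  have "ivm M eps eta Z sig_e2"
    unfolding ivm_def ivm_axioms_def
    using P meas_eps meas_eta meas_Z indep indep_Z_err ident_err ident_Z int_e2 int_h2 mean_e mean_h
      var_e int_Z4 var_Z by blast
  then show ?thesis by (rule ivm.main[OF _ pi1_nz lam_small])
qed

end
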